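(* Let $v_1,v_2\in L_2(-\infty,+\infty)$ be complex-valued and $\alpha\in\mathbb{R}$. Let $A(v_1,v_2,\alpha)$ be the operator in $L_2(-\infty,+\infty)$ acting by $$A(v_1,v_2,\alpha)\psi(x)=i\psi'(x)+v_1(x)\Big[\psi(-0)+\tfrac{i}{2}\langle\psi,v_1\rangle\Big]+v_2(x)\Big[\psi(+0)-\tfrac{i}{2}\langle\psi,v_2\rangle\Big],\quad x\neq0,$$ on the domain $$\{\psi\in W_2^1(\Omega):\ \psi(+0)-i\langle\psi,v_2\rangle=e^{i\alpha}[\psi(-0)+i\langle\psi,v_1\rangle]\}.$$ Then $A(v_1,v_2,\alpha)$ is a (densely defined) symmetric operator in $L_2(-\infty,+\infty)$.
   Context: $\Omega=\mathbb{R}\setminus\{0\}$; $W_2^1(\Omega)$ is the space of functions whose restrictions to each of the half-lines $(-\infty,0)$, $(0,\infty)$ belong to $W_2^1$ of that half-line; $\psi(\pm0)$ are the one-sided limits at $0$. $\langle f,g\rangle=\int_{-\infty}^{\infty}f(x)\overline{g(x)}\,dx$ is the $L_2$ inner product. *)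

theory Defs
  imports "HOL-Analysis.Analysis"
begin

text \<open>Complex-valued square integrable functions on the real line
  (concrete representatives; L2 classes are identified a.e.).\<close>
definition L2 :: "(real \<Rightarrow> complex) \<Rightarrow> bool" where
  "L2 f \<longleftrightarrow> f \<in> borel_measurable lborel \<and> integrable lborel (\<lambda>x. (cmod (f x))\<^sup>2)"

definition L2_norm :: "(real \<Rightarrow> complex) \<Rightarrow> real" where
  "L2_norm f = sqrt (LINT x|lborel. (cmod (f x))\<^sup>2)"

definition ip :: "(real \<Rightarrow> complex) \<Rightarrow> (real \<Rightarrow> complex) \<Rightarrow> complex" where
  "ip f g = (LINT x|lborel. f x * cnj (g x))"

text \<open>dpsi is a (weak) derivative of psi on Omega = R minus 0, lying in L2:
  psi is (the continuous representative) absolutely continuous on each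
  half-line with derivative dpsi.\<close>
definition is_deriv_Omega :: "(real \<Rightarrow> complex) \<Rightarrow> (real \<Rightarrow> complex) \<Rightarrow> bool" where
  "is_deriv_Omega psi dpsi \<longleftrightarrow> L2 dpsi \<and>
     (\<forall>x y. x \<le> y \<and> (0 < x \<or> y < 0) \<longrightarrow>
        psi y - psi x = (LINT t:{x..y}|lborel. dpsi t))"

definition W21_Omega :: "(real \<Rightarrow> complex) \<Rightarrow> bool" where
  "W21_Omega psi \<longleftrightarrow> L2 psi \<and> (\<exists>dpsi. is_deriv_Omega psi dpsi)"

definition lim_minus0 :: "(real \<Rightarrow> complex) \<Rightarrow> complex" where
  "lim_minus0 psi = Lim (at_left 0) psi"

definition lim_plus0 :: "(real \<Rightarrow> complex) \<Rightarrow> complex" where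
  "lim_plus0 psi = Lim (at_right 0) psi"

definition A_op :: "(real \<Rightarrow> complex) \<Rightarrow> (real \<Rightarrow> complex) \<Rightarrow>
    (real \<Rightarrow> complex) \<Rightarrow> (real \<Rightarrow> complex) \<Rightarrow> real \<Rightarrow> complex" where
  "A_op v1 v2 psi dpsi x =
     \<i> * dpsi x + v1 x * (lim_minus0 psi + (\<i>/2) * ip psi v1)
                + v2 x * (lim_plus0 psi - (\<i>/2) * ip psi v2)"

definition dom_A :: "(real \<Rightarrow> complex) \<Rightarrow> (real \<Rightarrow> complex) \<Rightarrow> real \<Rightarrow> (real \<Rightarrow> complex) set" where
  "dom_A v1 v2 \<alpha> = {psi. W21_Omega psi \<and>
     lim_plus0 psi - \<i> * ip psi v2 = exp (\<i> * complex_of_real \<alpha>) * (lim_minus0 psi + \<i> * ip psi v1)}"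

end

theory Submission imports Defs begin

lemma sq_add_le: "(cmod (a + b))\<^sup>2 \<le> 2 * (cmod a)\<^sup>2 + 2 * (cmod b)\<^sup>2"
proof -
  have "cmod (a+b) \<le> cmod a + cmod b" by (rule norm_triangle_ineq)
  hence "(cmod (a+b))\<^sup>2 \<le> (cmod a + cmod b)\<^sup>2"
    by (intro power_mono) auto
  also have "\<dots> = (cmod a)\<^sup>2 + 2 * (cmod a * cmod b) + (cmod b)\<^sup>2"
    by (simp add: power2_sum)
  also have "\<dots> \<le> 2 * (cmod a)\<^sup>2 + 2 * (cmod b)\<^sup>2"
    using sum_squares_bound[of "cmod a" "cmod b"] by linarith
  finally show ?thesis .
qed
lemma L2_meas: "L2 f \<Longrightarrow> f \<in> borel_measurable borel"
  unfolding L2_def by simp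

lemma L2_int: "L2 f \<Longrightarrow> integrable lborel (\<lambda>x. (cmod (f x))\<^sup>2)"
  unfolding L2_def by simp

lemma L2_add: assumes "L2 f" "L2 g" shows "L2 (\<lambda>x. f x + g x)"
  unfolding L2_def
proof
  show "(\<lambda>x. f x + g x) \<in> borel_measurable lborel" using assms[THEN L2_meas] by simp
  show "integrable lborel (\<lambda>x. (cmod (f x + g x))\<^sup>2)"
  proof (rule Bochner_Integration.integrable_bound)
    show "integrable lborel (\<lambda>x. 2 * (cmod (f x))\<^sup>2 + 2 * (cmod (g x))\<^sup>2)"
      using assms by (intro Bochner_Integration.integrable_add integrable_mult_right L2_int)
    show "(\<lambda>x. (cmod (f x + g x))\<^sup>2) \<in> borel_measurable lborel" using assms[THEN L2_meas] by simp
    show "AE x in lborel. norm ((cmod (f x + g x))\<^sup>2) \<le> norm (2 * (cmod (f x))\<^sup>2 + 2 * (cmod (g x))\<^sup>2)"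
      using sq_add_le by (auto intro!: AE_I2)
  qed
qed

lemma L2_cmult: assumes "L2 f" shows "L2 (\<lambda>x. c * f x)"
  unfolding L2_def
proof
  show "(\<lambda>x. c * f x) \<in> borel_measurable lborel" using assms[THEN L2_meas] by simp
  have "integrable lborel (\<lambda>x. (cmod c)\<^sup>2 * (cmod (f x))\<^sup>2)"
    using assms by (intro integrable_mult_right L2_int)
  thus "integrable lborel (\<lambda>x. (cmod (c * f x))\<^sup>2)"
    by (simp add: norm_mult power_mult_distrib)
qed

lemma L2_uminus: "L2 f \<Longrightarrow> L2 (\<lambda>x. - f x)"
  using L2_cmult[of f "-1"] by simp

lemma L2_diff: "L2 f \<Longrightarrow> L2 g \<Longrightarrow> L2 (\<lambda>x. f x - g x)"
  using L2_add[of f "\<lambda>x. - g x"] L2_uminus[of g] by simp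

lemma meas_cnj[measurable]: "f \<in> borel_measurable M \<Longrightarrow> (\<lambda>x. cnj (f x)) \<in> borel_measurable M"
  by (rule borel_measurable_continuous_on[OF continuous_on_cnj[OF continuous_on_id]])

lemma L2_cnj: "L2 f \<Longrightarrow> L2 (\<lambda>x. cnj (f x))"
  unfolding L2_def by (auto intro: meas_cnj)

lemma L2_zero: "L2 (\<lambda>x. 0)" unfolding L2_def by simp

lemma prod_le: "cmod (a * b) \<le> (cmod a)\<^sup>2 / 2 + (cmod b)\<^sup>2 / 2"
proof -
  have "cmod (a*b) = cmod a * cmod b" by (simp add: norm_mult)
  also have "\<dots> \<le> (cmod a)\<^sup>2 / 2 + (cmod b)\<^sup>2 / 2"
    using sum_squares_bound[of "cmod a" "cmod b"] by simp
  finally show ?thesis .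
qed

lemma L2_mult_int: assumes "L2 f" "L2 g" shows "integrable lborel (\<lambda>x. f x * g x)"
proof (rule Bochner_Integration.integrable_bound)
  show "integrable lborel (\<lambda>x. (cmod (f x))\<^sup>2 / 2 + (cmod (g x))\<^sup>2 / 2)"
    using assms by (intro Bochner_Integration.integrable_add integrable_divide_zero L2_int)
  show "(\<lambda>x. f x * g x) \<in> borel_measurable lborel" using assms[THEN L2_meas] by simp
  show "AE x in lborel. norm (f x * g x) \<le> norm ((cmod (f x))\<^sup>2 / 2 + (cmod (g x))\<^sup>2 / 2)"
    using prod_le by (auto intro!: AE_I2)
qed

lemma L2_ip_int: "L2 f \<Longrightarrow> L2 g \<Longrightarrow> integrable lborel (\<lambda>x. f x * cnj (g x))"
  by (intro L2_mult_int L2_cnj)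


lemma L2_set_int_fin: assumes "L2 f" "A \<in> sets borel" "emeasure lborel A < \<infinity>"
  shows "set_integrable lborel A f"
  unfolding set_integrable_def
proof (rule Bochner_Integration.integrable_bound)
  have "integrable lborel (indicator A :: real \<Rightarrow> real)"
    using assms by (simp add: integrable_indicator_iff)
  thus "integrable lborel (\<lambda>x. (cmod (f x))\<^sup>2 / 2 + indicator A x / 2)"
    using assms by (intro Bochner_Integration.integrable_add integrable_divide_zero L2_int)
  show "(\<lambda>x. indicat_real A x *\<^sub>R f x) \<in> borel_measurable lborel"
    using assms(1)[THEN L2_meas] assms(2) by measurable
  show "AE x in lborel. norm (indicat_real A x *\<^sub>R f x) \<le> norm ((cmod (f x))\<^sup>2 / 2 + indicator A x / 2)"
  proof (intro AE_I2)
    fix x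
    have "cmod (f x) \<le> (cmod (f x))\<^sup>2 / 2 + 1 / 2"
      using sum_squares_bound[of "cmod (f x)" 1] by simp
    thus "norm (indicat_real A x *\<^sub>R f x) \<le> norm ((cmod (f x))\<^sup>2 / 2 + indicator A x / 2)"
      by (auto simp: indicator_def)
  qed
qed

lemma L2_set_int: "L2 f \<Longrightarrow> set_integrable lborel {a..b} f"
  by (rule L2_set_int_fin) (auto simp: emeasure_lborel_Icc_eq)

lemma deriv_L2: "is_deriv_Omega p dp \<Longrightarrow> L2 dp"
  unfolding is_deriv_Omega_def by simp

lemma deriv_eq: "is_deriv_Omega p dp \<Longrightarrow> x \<le> y \<Longrightarrow> 0 < x \<or> y < 0 \<Longrightarrow>
   p y - p x = (LINT t:{x..y}|lborel. dp t)"
  unfolding is_deriv_Omega_def by blast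

lemma deriv_add: assumes "is_deriv_Omega p dp" "is_deriv_Omega q dq"
  shows "is_deriv_Omega (\<lambda>x. p x + q x) (\<lambda>x. dp x + dq x)"
  unfolding is_deriv_Omega_def
proof (intro conjI allI impI)
  show "L2 (\<lambda>x. dp x + dq x)" using assms by (intro L2_add deriv_L2)
  fix x y :: real assume h: "x \<le> y \<and> (0 < x \<or> y < 0)"
  have "(LINT t:{x..y}|lborel. dp t + dq t) = (LINT t:{x..y}|lborel. dp t) + (LINT t:{x..y}|lborel. dq t)"
    using assms by (intro set_integral_add L2_set_int deriv_L2)
  also have "\<dots> = (p y - p x) + (q y - q x)" using h assms by (simp add: deriv_eq)
  finally show "p y + q y - (p x + q x) = (LINT t:{x..y}|lborel. dp t + dq t)" by simp
qed

lemma deriv_cmult: assumes "is_deriv_Omega p dp"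
  shows "is_deriv_Omega (\<lambda>x. c * p x) (\<lambda>x. c * dp x)"
  unfolding is_deriv_Omega_def
proof (intro conjI allI impI)
  show "L2 (\<lambda>x. c * dp x)" using assms by (intro L2_cmult deriv_L2)
  fix x y :: real assume h: "x \<le> y \<and> (0 < x \<or> y < 0)"
  have "(LINT t:{x..y}|lborel. c * dp t) = c * (LINT t:{x..y}|lborel. dp t)"
    by (rule set_integral_mult_right)
  also have "\<dots> = c * (p y - p x)" using h assms by (simp add: deriv_eq)
  finally show "c * p y - c * p x = (LINT t:{x..y}|lborel. c * dp t)" by (simp add: algebra_simps)
qed

lemma tendsto_set_int_at_top:
  fixes g :: "real \<Rightarrow> complex" and S :: "real \<Rightarrow> real set"
  assumes gm: "g \<in> borel_measurable borel" and g: "set_integrable lborel B g" and S: "\<And>u. S u \<in> sets borel" and T: "T \<in> sets borel"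
    and SB: "eventually (\<lambda>u. S u \<subseteq> B) at_top"
    and conv: "\<And>x. eventually (\<lambda>u. x \<in> S u \<longleftrightarrow> x \<in> T) at_top"
  shows "((\<lambda>u. set_lebesgue_integral lborel (S u) g) \<longlongrightarrow> set_lebesgue_integral lborel T g) at_top"
  unfolding set_lebesgue_integral_def
proof (rule integral_dominated_convergence_at_top[where w="\<lambda>x. norm (indicator B x *\<^sub>R g x)" and s="\<lambda>u x. indicator (S u) x *\<^sub>R g x" and f="\<lambda>x. indicator T x *\<^sub>R g x" and M=lborel])
  show "(\<lambda>x. indicat_real T x *\<^sub>R g x) \<in> borel_measurable lborel" using gm T by measurable
  show "\<And>t. (\<lambda>x. indicat_real (S t) x *\<^sub>R g x) \<in> borel_measurable lborel" using gm S by measurable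
  show "integrable lborel (\<lambda>x. norm (indicat_real B x *\<^sub>R g x))"
    using g unfolding set_integrable_def by (rule integrable_norm)
  show "AE x in lborel. ((\<lambda>i. indicat_real (S i) x *\<^sub>R g x) \<longlongrightarrow> indicat_real T x *\<^sub>R g x) at_top"
  proof (intro AE_I2)
    fix x
    show "((\<lambda>i. indicat_real (S i) x *\<^sub>R g x) \<longlongrightarrow> indicat_real T x *\<^sub>R g x) at_top"
      by (rule tendsto_eventually) (use conv[of x] in \<open>auto elim!: eventually_mono simp: indicator_def\<close>)
  qed
  show "\<forall>\<^sub>F i in at_top. AE x in lborel. norm (indicat_real (S i) x *\<^sub>R g x) \<le> norm (indicat_real B x *\<^sub>R g x)"
    using SB by (auto elim!: eventually_mono intro!: AE_I2 simp: indicator_def)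
qed

lemma W_lim_right:
  assumes d: "is_deriv_Omega psi dpsi"
  shows "(psi \<longlongrightarrow> psi 1 - (LINT t:{0<..1}|lborel. dpsi t)) (at_right 0)"
proof -
  have dm: "dpsi \<in> borel_measurable borel" using d by (intro L2_meas deriv_L2)
  have "((\<lambda>u. LINT t:{inverse u..1}|lborel. dpsi t) \<longlongrightarrow> (LINT t:{0<..1}|lborel. dpsi t)) at_top"
  proof (rule tendsto_set_int_at_top[OF dm L2_set_int[OF deriv_L2[OF d], of 0 1]])
    show "\<forall>\<^sub>F u::real in at_top. {inverse u..1} \<subseteq> {0..1}"
      using eventually_gt_at_top[of "0::real"] by (rule eventually_mono) auto
    fix x :: real
    show "\<forall>\<^sub>F u in at_top. (x \<in> {inverse u..1}) = (x \<in> {0<..1})"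
    proof (cases "x > 0")
      case True
      show ?thesis
      proof (rule eventually_mono[OF eventually_gt_at_top[of "inverse x"]])
        fix u assume "inverse x < u"
        hence "inverse u < x" using True
          by (metis inverse_less_imp_less inverse_inverse_eq inverse_positive_iff_positive)
        thus "(x \<in> {inverse u..1}) = (x \<in> {0<..1})" using True by auto
      qed
    next
      case False
      show ?thesis
      proof (rule eventually_mono[OF eventually_gt_at_top[of 0]])
        fix u :: real assume "0 < u"
        hence "0 < inverse u" by simp
        hence "\<not> inverse u \<le> x" using False by linarith
        thus "(x \<in> {inverse u..1}) = (x \<in> {0<..1})" using False by auto
      qed
    qed
  qed auto
  hence "((\<lambda>t. LINT s:{t..1}|lborel. dpsi s) \<longlongrightarrow> (LINT t:{0<..1}|lborel. dpsi t)) (at_right 0)"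
    by (simp add: filterlim_at_right_to_top)
  hence lim: "((\<lambda>t. psi 1 - (LINT s:{t..1}|lborel. dpsi s)) \<longlongrightarrow> psi 1 - (LINT t:{0<..1}|lborel. dpsi t)) (at_right 0)"
    by (intro tendsto_intros)
  have ev: "\<forall>\<^sub>F t in at_right 0. psi 1 - (LINT s:{t..1}|lborel. dpsi s) = psi t"
  proof (rule eventually_mono[OF eventually_at_right_real[of 0 1]])
    fix y :: real assume "y \<in> {0<..<1}"
    hence h: "psi 1 - psi y = (LINT s:{y..1}|lborel. dpsi s)" using deriv_eq[OF d, of y 1] by simp
    show "psi 1 - (LINT s:{y..1}|lborel. dpsi s) = psi y" by (simp add: h[symmetric])
  qed simp
  show ?thesis by (rule Lim_transform_eventually[OF lim ev])
qed

lemma W_lim_left: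
  assumes d: "is_deriv_Omega psi dpsi"
  shows "(psi \<longlongrightarrow> psi (-1) + (LINT t:{-1..<0}|lborel. dpsi t)) (at_left 0)"
proof -
  have dm: "dpsi \<in> borel_measurable borel" using d by (intro L2_meas deriv_L2)
  have "((\<lambda>u. LINT t:{-1..- inverse u}|lborel. dpsi t) \<longlongrightarrow> (LINT t:{-1..<0}|lborel. dpsi t)) at_top"
  proof (rule tendsto_set_int_at_top[OF dm L2_set_int[OF deriv_L2[OF d], of "-1" 0]])
    show "\<forall>\<^sub>F u::real in at_top. {-1..- inverse u} \<subseteq> {-1..0}"
      using eventually_gt_at_top[of "0::real"] by (rule eventually_mono) auto
    fix x :: real
    show "\<forall>\<^sub>F u in at_top. (x \<in> {-1..- inverse u}) = (x \<in> {-1..<0})"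
    proof (cases "x < 0")
      case True
      show ?thesis
      proof (rule eventually_mono[OF eventually_gt_at_top[of "inverse (-x)"]])
        fix u assume "inverse (-x) < u"
        hence "inverse u < -x" using True
          by (metis inverse_less_imp_less inverse_inverse_eq inverse_positive_iff_positive neg_0_less_iff_less)
        thus "(x \<in> {-1..- inverse u}) = (x \<in> {-1..<0})" using True by auto
      qed
    next
      case False
      show ?thesis
      proof (rule eventually_mono[OF eventually_gt_at_top[of 0]])
        fix u :: real assume "0 < u"
        hence "0 < inverse u" by simp
        hence "\<not> x \<le> - inverse u" using False by linarith
        thus "(x \<in> {-1..- inverse u}) = (x \<in> {-1..<0})" using False by auto
      qed
    qed
  qed auto
  hence "((\<lambda>t. LINT s:{-1..-t}|lborel. dpsi s) \<longlongrightarrow> (LINT t:{-1..<0}|lborel. dpsi t)) (at_right 0)"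
    by (simp add: filterlim_at_right_to_top)
  hence "((\<lambda>t. LINT s:{-1..t}|lborel. dpsi s) \<longlongrightarrow> (LINT t:{-1..<0}|lborel. dpsi t)) (at_left 0)"
    by (simp add: filterlim_at_left_to_right)
  hence lim: "((\<lambda>t. psi (-1) + (LINT s:{-1..t}|lborel. dpsi s)) \<longlongrightarrow> psi (-1) + (LINT t:{-1..<0}|lborel. dpsi t)) (at_left 0)"
    by (intro tendsto_intros)
  have ev: "\<forall>\<^sub>F t in at_left 0. psi (-1) + (LINT s:{-1..t}|lborel. dpsi s) = psi t"
  proof (rule eventually_mono[OF eventually_at_left_real[of "-1" 0]])
    fix y :: real assume "y \<in> {-1<..<0}"
    hence h: "psi y - psi (-1) = (LINT s:{-1..y}|lborel. dpsi s)" using deriv_eq[OF d, of "-1" y] by simp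
    show "psi (-1) + (LINT s:{-1..y}|lborel. dpsi s) = psi y" by (simp add: h[symmetric])
  qed simp
  show ?thesis by (rule Lim_transform_eventually[OF lim ev])
qed

lemma W_lim_plus0: "is_deriv_Omega psi dpsi \<Longrightarrow> (psi \<longlongrightarrow> lim_plus0 psi) (at_right 0)"
  unfolding lim_plus0_def using W_lim_right tendsto_Lim trivial_limit_at_right_real by metis

lemma W_lim_minus0: "is_deriv_Omega psi dpsi \<Longrightarrow> (psi \<longlongrightarrow> lim_minus0 psi) (at_left 0)"
  unfolding lim_minus0_def using W_lim_left tendsto_Lim trivial_limit_at_left_real by metis

lemma prod_rule:
  fixes p r dp dr :: "real \<Rightarrow> complex" and x y :: real
  assumes xy: "x \<le> y"
    and dpm: "dp \<in> borel_measurable borel" and drm: "dr \<in> borel_measurable borel"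
    and dpi: "set_integrable lborel {x..y} dp" and dri: "set_integrable lborel {x..y} dr"
    and pe: "\<And>t. t \<in> {x..y} \<Longrightarrow> p t - p x = (LINT s:{x..t}|lborel. dp s)"
    and re: "\<And>t. t \<in> {x..y} \<Longrightarrow> r t - r x = (LINT s:{x..t}|lborel. dr s)"
  shows "(LINT t:{x..y}|lborel. dp t * r t + p t * dr t) = p y * r y - p x * r x"
proof -
  note [measurable] = dpm drm
  define I where "I = {x..y}"
  define a where "a t = norm (indicator I t *\<^sub>R dp t)" for t
  define b where "b t = norm (indicator I t *\<^sub>R dr t)" for t
  have a_int: "integrable lborel a" unfolding a_def using dpi
    unfolding set_integrable_def I_def by (rule integrable_norm)
  have b_int: "integrable lborel b" unfolding b_def using dri
    unfolding set_integrable_def I_def by (rule integrable_norm)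
  have am[measurable]: "a \<in> borel_measurable borel" unfolding a_def I_def by measurable
  have bm[measurable]: "b \<in> borel_measurable borel" unfolding b_def I_def by measurable
  have a_nn: "a t \<ge> 0" "b t \<ge> 0" for t unfolding a_def b_def by auto
  have H_int: "integrable (lborel \<Otimes>\<^sub>M lborel) (\<lambda>(t,s). a t * b s)"
  proof (rule lborel_pair.Fubini_integrable)
    show "(\<lambda>(t,s). a t * b s) \<in> borel_measurable (lborel \<Otimes>\<^sub>M lborel)" by measurable
    have "(\<lambda>t. \<integral>s. norm (case (t, s) of (t, s) \<Rightarrow> a t * b s) \<partial>lborel) = (\<lambda>t. a t * integral\<^sup>L lborel b)"
      using a_nn by (auto simp: abs_mult)
    thus "integrable lborel (\<lambda>t. \<integral>s. norm (case (t, s) of (t, s) \<Rightarrow> a t * b s) \<partial>lborel)"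
      using a_int by simp
    show "AE t in lborel. integrable lborel (\<lambda>s. case (t, s) of (t, s) \<Rightarrow> a t * b s)"
      using b_int by simp
  qed
  define G1 where "G1 t s = (if t \<in> I \<and> x \<le> s \<and> s < t then dp t * dr s else 0)" for t s
  define G2 where "G2 t s = (if s \<in> I \<and> x \<le> t \<and> t \<le> s then dp t * dr s else 0)" for t s
  have G1m[measurable]: "(\<lambda>(t,s). G1 t s) \<in> borel_measurable (lborel \<Otimes>\<^sub>M lborel)"
    unfolding G1_def I_def by measurable
  have G2m[measurable]: "(\<lambda>(t,s). G2 t s) \<in> borel_measurable (lborel \<Otimes>\<^sub>M lborel)"
    unfolding G2_def I_def by measurable
  have G1b: "norm (G1 t s) \<le> norm (a t * b s)" for t s
    unfolding G1_def a_def b_def I_def by (auto simp: norm_mult)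
  have G2b: "norm (G2 t s) \<le> norm (a t * b s)" for t s
    unfolding G2_def a_def b_def I_def by (auto simp: norm_mult)
  have G1b': "cmod (G1 t s) \<le> \<bar>a t * b s\<bar>" for t s using G1b[of t s] by simp
  have G1i: "integrable (lborel \<Otimes>\<^sub>M lborel) (\<lambda>(t,s). G1 t s)"
    by (rule Bochner_Integration.integrable_bound[OF H_int G1m]) (auto intro!: AE_I2 simp: G1b')
  have G2b': "cmod (G2 t s) \<le> \<bar>a t * b s\<bar>" for t s using G2b[of t s] by simp
  have G2i: "integrable (lborel \<Otimes>\<^sub>M lborel) (\<lambda>(t,s). G2 t s)"
    by (rule Bochner_Integration.integrable_bound[OF H_int G2m]) (auto intro!: AE_I2 simp: G2b')
  have G1si: "integrable lborel (\<lambda>s. G1 t s)" for t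
    by (rule Bochner_Integration.integrable_bound[of _ "\<lambda>s. a t * b s"]) (auto intro!: AE_I2 simp: G1b' b_int)
  have G2si: "integrable lborel (\<lambda>s. G2 t s)" for t
    by (rule Bochner_Integration.integrable_bound[of _ "\<lambda>s. a t * b s"]) (auto intro!: AE_I2 simp: G2b' b_int)
  have E1: "(\<integral>s. G1 t s \<partial>lborel) = indicator I t *\<^sub>R (dp t * (r t - r x))" for t
  proof (cases "t \<in> I")
    case True
    have "(\<integral>s. G1 t s \<partial>lborel) = (\<integral>s. dp t * (indicator {x..<t} s *\<^sub>R dr s) \<partial>lborel)"
      using True by (intro Bochner_Integration.integral_cong) (auto simp: G1_def indicator_def)
    also have "\<dots> = dp t * (\<integral>s. indicator {x..<t} s *\<^sub>R dr s \<partial>lborel)" by (rule integral_mult_right_zero)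
    also have "(\<integral>s. indicator {x..<t} s *\<^sub>R dr s \<partial>lborel) = (\<integral>s. indicator {x..t} s *\<^sub>R dr s \<partial>lborel)"
      by (rule integral_cong_AE) (auto intro!: eventually_mono[OF AE_lborel_singleton[of t]] simp: indicator_def)
    also have "\<dots> = r t - r x" using re[of t] True unfolding I_def set_lebesgue_integral_def by simp
    finally show ?thesis using True by simp
  next
    case False
    thus ?thesis by (simp add: G1_def)
  qed
  have E2: "(\<integral>t. G2 t s \<partial>lborel) = indicator I s *\<^sub>R (dr s * (p s - p x))" for s
  proof (cases "s \<in> I")
    case True
    have "(\<integral>t. G2 t s \<partial>lborel) = (\<integral>t. (indicator {x..s} t *\<^sub>R dp t) * dr s \<partial>lborel)"
      using True by (intro Bochner_Integration.integral_cong) (auto simp: G2_def indicator_def)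
    also have "\<dots> = (\<integral>t. indicator {x..s} t *\<^sub>R dp t \<partial>lborel) * dr s" by (rule integral_mult_left_zero)
    also have "(\<integral>t. indicator {x..s} t *\<^sub>R dp t \<partial>lborel) = p s - p x"
      using pe[of s] True unfolding I_def set_lebesgue_integral_def by simp
    finally show ?thesis using True by (simp add: mult.commute)
  next
    case False
    thus ?thesis by (simp add: G2_def)
  qed
  have E3: "G1 t s + G2 t s = (indicator I t *\<^sub>R dp t) * (indicator I s *\<^sub>R dr s)" for t s
    unfolding G1_def G2_def I_def by (auto simp: indicator_def)
  define A where "A = (\<integral>t. indicator I t *\<^sub>R dp t \<partial>lborel)"
  define B where "B = (\<integral>t. indicator I t *\<^sub>R dr t \<partial>lborel)"
  have Ai: "integrable lborel (\<lambda>t. indicator I t *\<^sub>R dp t)" using dpi unfolding set_integrable_def I_def .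
  have Bi: "integrable lborel (\<lambda>t. indicator I t *\<^sub>R dr t)" using dri unfolding set_integrable_def I_def .
  have A_eq: "A = p y - p x" using pe[of y] xy unfolding A_def I_def set_lebesgue_integral_def by simp
  have B_eq: "B = r y - r x" using re[of y] xy unfolding B_def I_def set_lebesgue_integral_def by simp
  have F1i: "integrable lborel (\<lambda>t. \<integral>s. G1 t s \<partial>lborel)" using lborel_pair.integrable_fst[OF G1i] .
  have F2i': "integrable lborel (\<lambda>t. \<integral>s. G2 t s \<partial>lborel)" using lborel_pair.integrable_fst[OF G2i] .
  have F2i: "integrable lborel (\<lambda>s. \<integral>t. G2 t s \<partial>lborel)" using lborel_pair.integrable_snd[OF G2i] .
  have swap: "(\<integral>s. (\<integral>t. G2 t s \<partial>lborel) \<partial>lborel) = (\<integral>t. (\<integral>s. G2 t s \<partial>lborel) \<partial>lborel)"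
    by (rule lborel_pair.Fubini_integral[OF G2i])
  have D: "(\<integral>t. (\<integral>s. G1 t s \<partial>lborel) \<partial>lborel) + (\<integral>s. (\<integral>t. G2 t s \<partial>lborel) \<partial>lborel) = A * B"
  proof -
    have "(\<integral>t. (\<integral>s. G1 t s \<partial>lborel) \<partial>lborel) + (\<integral>t. (\<integral>s. G2 t s \<partial>lborel) \<partial>lborel)
        = (\<integral>t. (\<integral>s. G1 t s \<partial>lborel) + (\<integral>s. G2 t s \<partial>lborel) \<partial>lborel)"
      using F1i F2i' by (rule Bochner_Integration.integral_add[symmetric])
    also have "\<dots> = (\<integral>t. (\<integral>s. G1 t s + G2 t s \<partial>lborel) \<partial>lborel)"
      using G1si G2si by (intro Bochner_Integration.integral_cong refl Bochner_Integration.integral_add[symmetric])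
    also have "\<dots> = (\<integral>t. (indicator I t *\<^sub>R dp t) * B \<partial>lborel)"
      unfolding E3 B_def by (intro Bochner_Integration.integral_cong refl integral_mult_right_zero)
    also have "\<dots> = A * B" unfolding A_def by (rule integral_mult_left_zero)
    finally show ?thesis using swap by simp
  qed
  have pw: "indicator I t *\<^sub>R (dp t * r t + p t * dr t) =
      (\<integral>s. G1 t s \<partial>lborel) + (\<integral>t'. G2 t' t \<partial>lborel) + (indicator I t *\<^sub>R dp t) * r x + p x * (indicator I t *\<^sub>R dr t)" for t
    unfolding E1 E2 by (auto simp: indicator_def algebra_simps)
  have "(LINT t:{x..y}|lborel. dp t * r t + p t * dr t)
      = (\<integral>t. (\<integral>s. G1 t s \<partial>lborel) + (\<integral>t'. G2 t' t \<partial>lborel) + (indicator I t *\<^sub>R dp t) * r x + p x * (indicator I t *\<^sub>R dr t) \<partial>lborel)"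
    unfolding set_lebesgue_integral_def I_def[symmetric] pw ..
  also have "\<dots> = (\<integral>t. (\<integral>s. G1 t s \<partial>lborel) \<partial>lborel) + (\<integral>t. (\<integral>t'. G2 t' t \<partial>lborel) \<partial>lborel) + A * r x + p x * B"
  proof -
    have i3: "integrable lborel (\<lambda>t. (indicator I t *\<^sub>R dp t) * r x)" using Ai by (rule integrable_mult_left)
    have i4: "integrable lborel (\<lambda>t. p x * (indicator I t *\<^sub>R dr t))" using Bi by (rule integrable_mult_right)
    have e3: "(\<integral>t. (indicator I t *\<^sub>R dp t) * r x \<partial>lborel) = A * r x"
      unfolding A_def by (rule integral_mult_left_zero)
    have e4: "(\<integral>t. p x * (indicator I t *\<^sub>R dr t) \<partial>lborel) = p x * B"
      unfolding B_def by (rule integral_mult_right_zero)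
    show ?thesis
      apply (subst Bochner_Integration.integral_add)
        apply (intro Bochner_Integration.integrable_add F1i F2i i3)
       apply (rule i4)
      apply (subst Bochner_Integration.integral_add)
        apply (intro Bochner_Integration.integrable_add F1i F2i)
       apply (rule i3)
      apply (subst Bochner_Integration.integral_add)
        apply (rule F1i)
       apply (rule F2i)
      unfolding e3 e4 ..
  qed
  also have "\<dots> = A * B + A * r x + p x * B" using D by simp
  also have "\<dots> = p y * r y - p x * r x" unfolding A_eq B_eq by (simp add: algebra_simps)
  finally show ?thesis .
qed

lemma set_int_cnj: "(LINT t:A|lborel. cnj (f t)) = cnj (LINT t:A|lborel. f t)"
proof -
  have "(\<lambda>x. indicator A x *\<^sub>R cnj (f x)) = (\<lambda>x. cnj (indicator A x *\<^sub>R f x))"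
    by (auto simp: indicator_def)
  thus ?thesis unfolding set_lebesgue_integral_def
    using Bochner_Integration.integral_cnj[of lborel "\<lambda>x. indicator A x *\<^sub>R f x"] by simp
qed

lemma W_prod:
  assumes d1: "is_deriv_Omega psi dpsi" and d2: "is_deriv_Omega phi dphi"
    and xy: "x \<le> y" "0 < x \<or> y < 0"
  shows "(LINT t:{x..y}|lborel. dpsi t * cnj (phi t) + psi t * cnj (dphi t)) = psi y * cnj (phi y) - psi x * cnj (phi x)"
proof (rule prod_rule[where dp=dpsi and dr="\<lambda>t. cnj (dphi t)"])
  show "x \<le> y" by fact
  show "dpsi \<in> borel_measurable borel" using d1 by (intro L2_meas deriv_L2)
  show "(\<lambda>t. cnj (dphi t)) \<in> borel_measurable borel" using d2 by (intro meas_cnj L2_meas deriv_L2)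
  show "set_integrable lborel {x..y} dpsi" using d1 by (intro L2_set_int deriv_L2)
  show "set_integrable lborel {x..y} (\<lambda>t. cnj (dphi t))" using d2 by (intro L2_set_int L2_cnj deriv_L2)
  fix t assume t: "t \<in> {x..y}"
  hence c: "x \<le> t" "0 < x \<or> t < 0" using xy by auto
  show "psi t - psi x = (LINT s:{x..t}|lborel. dpsi s)" using deriv_eq[OF d1 c] .
  show "cnj (phi t) - cnj (phi x) = (LINT s:{x..t}|lborel. cnj (dphi s))"
    unfolding set_int_cnj using deriv_eq[OF d2 c] by (metis complex_cnj_diff)
qed

lemma int_lim_zero:
  fixes P :: "real \<Rightarrow> complex"
  assumes Pi: "integrable lborel P" and lim: "(P \<longlongrightarrow> l) at_top"
  shows "l = 0"
proof (rule ccontr)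
  assume "l \<noteq> 0"
  define c where "c = cmod l / 2"
  have c: "c > 0" using \<open>l \<noteq> 0\<close> by (simp add: c_def)
  have "eventually (\<lambda>t. dist (P t) l < c) at_top" using lim c by (rule tendstoD)
  then obtain T where T: "\<And>t. t \<ge> T \<Longrightarrow> dist (P t) l < c" by (auto simp: eventually_at_top_linorder)
  have PT: "cmod (P t) \<ge> c" if "t \<ge> T" for t
  proof -
    have "cmod l \<le> cmod (P t) + dist (P t) l"
      using norm_triangle_ineq4[of "P t" "P t - l"] by (simp add: dist_norm)
    thus ?thesis using T[OF that] by (simp add: c_def)
  qed
  have bound: "real n * c \<le> (\<integral>t. cmod (P t) \<partial>lborel)" for n :: nat
  proof -
    have "(\<integral>t. indicator {T..T + real n} t * c \<partial>lborel) \<le> (\<integral>t. cmod (P t) \<partial>lborel)"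
    proof (rule integral_mono)
      show "integrable lborel (\<lambda>t. indicator {T..T + real n} t * c)"
        by (intro integrable_mult_left) (simp add: integrable_indicator_iff emeasure_lborel_Icc_eq)
      show "integrable lborel (\<lambda>t. cmod (P t))" using Pi by (rule integrable_norm)
      fix t show "indicator {T..T + real n} t * c \<le> cmod (P t)"
        using PT[of t] by (auto simp: indicator_def)
    qed
    moreover have "(\<integral>t. indicator {T..T + real n} t * c \<partial>lborel) = real n * c"
      by (simp add: integral_mult_left_zero)
    ultimately show ?thesis by simp
  qed
  obtain n :: nat where "real n > (\<integral>t. cmod (P t) \<partial>lborel) / c" using reals_Archimedean2 by blast
  hence "real n * c > (\<integral>t. cmod (P t) \<partial>lborel)" using c by (simp add: field_simps)
  thus False using bound[of n] by simp
qed

lemma W_ibp: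
  assumes d1: "is_deriv_Omega psi dpsi" and d2: "is_deriv_Omega phi dphi"
    and l1: "L2 psi" and l2: "L2 phi"
  shows "(\<integral>t. dpsi t * cnj (phi t) + psi t * cnj (dphi t) \<partial>lborel)
      = lim_minus0 psi * cnj (lim_minus0 phi) - lim_plus0 psi * cnj (lim_plus0 phi)"
proof -
  define g where "g t = dpsi t * cnj (phi t) + psi t * cnj (dphi t)" for t
  define P where "P t = psi t * cnj (phi t)" for t
  have gi: "integrable lborel g" unfolding g_def
    using L2_ip_int[OF deriv_L2[OF d1] l2] L2_ip_int[OF l1 deriv_L2[OF d2]]
    by (intro Bochner_Integration.integrable_add)
  have gm[measurable]: "g \<in> borel_measurable borel" using borel_measurable_integrable[OF gi] by simp
  have gs: "set_integrable lborel A g" if "A \<in> sets borel" for A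
    unfolding set_integrable_def using that gi by (intro integrable_mult_indicator) auto
  have Pi: "integrable lborel P" unfolding P_def using l1 l2 by (rule L2_ip_int)
  have Wp: "(LINT t:{x..y}|lborel. g t) = P y - P x" if "x \<le> y" "0 < x \<or> y < 0" for x y
    unfolding g_def P_def using W_prod[OF d1 d2 that] .
  have P_top: "(P \<longlongrightarrow> 0) at_top"
  proof -
    have "((\<lambda>u. LINT t:{1..u}|lborel. g t) \<longlongrightarrow> (LINT t:{1..}|lborel. g t)) at_top"
    proof (rule tendsto_set_int_at_top[OF gm gs[of "{1..}"]])
      fix x :: real
      show "\<forall>\<^sub>F u in at_top. (x \<in> {1..u}) = (x \<in> {1..})"
        using eventually_ge_at_top[of x] by (rule eventually_mono) auto
    qed auto
    hence lim: "((\<lambda>u. P 1 + (LINT t:{1..u}|lborel. g t)) \<longlongrightarrow> P 1 + (LINT t:{1..}|lborel. g t)) at_top"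
      by (intro tendsto_intros)
    have ev: "\<forall>\<^sub>F u in at_top. P 1 + (LINT t:{1..u}|lborel. g t) = P u"
      using eventually_ge_at_top[of "1::real"] by (rule eventually_mono) (simp add: Wp)
    have l: "(P \<longlongrightarrow> P 1 + (LINT t:{1..}|lborel. g t)) at_top"
      by (rule Lim_transform_eventually[OF lim ev])
    with int_lim_zero[OF Pi l] l show ?thesis by simp
  qed
  have P_bot: "((\<lambda>u. P (-u)) \<longlongrightarrow> 0) at_top"
  proof -
    have "((\<lambda>u. LINT t:{-u..-1}|lborel. g t) \<longlongrightarrow> (LINT t:{..-1}|lborel. g t)) at_top"
    proof (rule tendsto_set_int_at_top[OF gm gs[of "{..-1}"]])
      fix x :: real
      show "\<forall>\<^sub>F u in at_top. (x \<in> {-u..-1}) = (x \<in> {..-1})"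
        using eventually_ge_at_top[of "-x"] by (rule eventually_mono) auto
    qed auto
    hence lim: "((\<lambda>u. P (-1) - (LINT t:{-u..-1}|lborel. g t)) \<longlongrightarrow> P (-1) - (LINT t:{..-1}|lborel. g t)) at_top"
      by (intro tendsto_intros)
    have ev: "\<forall>\<^sub>F u in at_top. P (-1) - (LINT t:{-u..-1}|lborel. g t) = P (-u)"
      using eventually_ge_at_top[of "1::real"] by (rule eventually_mono) (simp add: Wp)
    have l: "((\<lambda>u. P (-u)) \<longlongrightarrow> P (-1) - (LINT t:{..-1}|lborel. g t)) at_top"
      by (rule Lim_transform_eventually[OF lim ev])
    have Pi': "integrable lborel (\<lambda>u. P (-u))"
      using lborel_integrable_real_affine_iff[of "-1" P 0] Pi by simp
    with int_lim_zero[OF Pi' l] l show ?thesis by simp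
  qed
  define Lp where "Lp = lim_plus0 psi * cnj (lim_plus0 phi)"
  define Lm where "Lm = lim_minus0 psi * cnj (lim_minus0 phi)"
  have Pr: "(P \<longlongrightarrow> Lp) (at_right 0)" unfolding P_def Lp_def
    by (intro tendsto_intros W_lim_plus0[OF d1] W_lim_plus0[OF d2])
  have Pl: "(P \<longlongrightarrow> Lm) (at_left 0)" unfolding P_def Lm_def
    by (intro tendsto_intros W_lim_minus0[OF d1] W_lim_minus0[OF d2])
  have Pr': "((\<lambda>u. P (inverse u)) \<longlongrightarrow> Lp) at_top" using Pr by (simp add: filterlim_at_right_to_top)
  have Pl': "((\<lambda>u. P (- inverse u)) \<longlongrightarrow> Lm) at_top" using Pl
    by (simp add: filterlim_at_right_to_top filterlim_at_left_to_right)
  have R: "(LINT t:{0<..}|lborel. g t) = - Lp"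
  proof (rule tendsto_unique[OF trivial_limit_at_top_linorder])
    show "((\<lambda>u. LINT t:{inverse u..u}|lborel. g t) \<longlongrightarrow> (LINT t:{0<..}|lborel. g t)) at_top"
    proof (rule tendsto_set_int_at_top[OF gm gs[of "{0<..}"]])
      show "\<forall>\<^sub>F u::real in at_top. {inverse u..u} \<subseteq> {0<..}"
      proof (rule eventually_mono[OF eventually_gt_at_top[of "0::real"]])
        fix u :: real assume "0 < u"
        hence iu: "0 < inverse u" by simp
        show "{inverse u..u} \<subseteq> {0<..}"
        proof
          fix t assume "t \<in> {inverse u..u}"
          hence "inverse u \<le> t" by simp
          hence "0 < t" using iu by linarith
          thus "t \<in> {0<..}" by simp
        qed
      qed
      fix x :: real
      show "\<forall>\<^sub>F u in at_top. (x \<in> {inverse u..u}) = (x \<in> {0<..})"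
      proof (cases "x > 0")
        case True
        show ?thesis
        proof (rule eventually_mono[OF eventually_gt_at_top[of "max x (inverse x)"]])
          fix u assume u: "max x (inverse x) < u"
          hence "inverse u < x" using True
            by (metis inverse_less_imp_less inverse_inverse_eq inverse_positive_iff_positive max_less_iff_conj)
          thus "(x \<in> {inverse u..u}) = (x \<in> {0<..})" using True u by auto
        qed
      next
        case False
        show ?thesis
        proof (rule eventually_mono[OF eventually_gt_at_top[of 0]])
          fix u :: real assume "0 < u"
          hence "0 < inverse u" by simp
          hence "\<not> inverse u \<le> x" using False by linarith
          thus "(x \<in> {inverse u..u}) = (x \<in> {0<..})" using False by auto
        qed
      qed
    qed auto
    have ev: "\<forall>\<^sub>F u in at_top. P u - P (inverse u) = (LINT t:{inverse u..u}|lborel. g t)"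
    proof (rule eventually_mono[OF eventually_gt_at_top[of "1::real"]])
      fix u :: real assume u: "1 < u"
      hence "inverse u < 1" "0 < inverse u" by (auto simp: inverse_less_1_iff)
      hence "inverse u \<le> u" using u by linarith
      thus "P u - P (inverse u) = (LINT t:{inverse u..u}|lborel. g t)" using Wp[of "inverse u" u] u by simp
    qed
    have "((\<lambda>u. P u - P (inverse u)) \<longlongrightarrow> 0 - Lp) at_top" by (intro tendsto_intros P_top Pr')
    thus "((\<lambda>u. LINT t:{inverse u..u}|lborel. g t) \<longlongrightarrow> - Lp) at_top"
      using Lim_transform_eventually[OF _ ev] by simp
  qed
  have L: "(LINT t:{..<0}|lborel. g t) = Lm"
  proof (rule tendsto_unique[OF trivial_limit_at_top_linorder])
    show "((\<lambda>u. LINT t:{-u..- inverse u}|lborel. g t) \<longlongrightarrow> (LINT t:{..<0}|lborel. g t)) at_top"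
    proof (rule tendsto_set_int_at_top[OF gm gs[of "{..<0}"]])
      show "\<forall>\<^sub>F u::real in at_top. {-u..- inverse u} \<subseteq> {..<0}"
      proof (rule eventually_mono[OF eventually_gt_at_top[of "0::real"]])
        fix u :: real assume "0 < u"
        hence iu: "0 < inverse u" by simp
        show "{-u..- inverse u} \<subseteq> {..<0}"
        proof
          fix t assume "t \<in> {-u..- inverse u}"
          hence "t \<le> - inverse u" by simp
          hence "t < 0" using iu by linarith
          thus "t \<in> {..<0}" by simp
        qed
      qed
      fix x :: real
      show "\<forall>\<^sub>F u in at_top. (x \<in> {-u..- inverse u}) = (x \<in> {..<0})"
      proof (cases "x < 0")
        case True
        show ?thesis
        proof (rule eventually_mono[OF eventually_gt_at_top[of "max (-x) (inverse (-x))"]])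
          fix u assume u: "max (-x) (inverse (-x)) < u"
          hence "inverse u < -x" using True
            by (metis inverse_less_imp_less inverse_inverse_eq inverse_positive_iff_positive max_less_iff_conj neg_0_less_iff_less)
          thus "(x \<in> {-u..- inverse u}) = (x \<in> {..<0})" using True u by auto
        qed
      next
        case False
        show ?thesis
        proof (rule eventually_mono[OF eventually_gt_at_top[of 0]])
          fix u :: real assume "0 < u"
          hence "0 < inverse u" by simp
          hence "\<not> x \<le> - inverse u" using False by linarith
          thus "(x \<in> {-u..- inverse u}) = (x \<in> {..<0})" using False by auto
        qed
      qed
    qed auto
    have ev: "\<forall>\<^sub>F u in at_top. P (- inverse u) - P (-u) = (LINT t:{-u..- inverse u}|lborel. g t)"
    proof (rule eventually_mono[OF eventually_gt_at_top[of "1::real"]])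
      fix u :: real assume u: "1 < u"
      hence "inverse u < 1" "0 < inverse u" by (auto simp: inverse_less_1_iff)
      hence "-u \<le> - inverse u" using u by linarith
      thus "P (- inverse u) - P (-u) = (LINT t:{-u..- inverse u}|lborel. g t)"
        using Wp[of "-u" "- inverse u"] \<open>0 < inverse u\<close> by simp
    qed
    have "((\<lambda>u. P (- inverse u) - P (-u)) \<longlongrightarrow> Lm - 0) at_top" by (intro tendsto_intros P_bot Pl')
    thus "((\<lambda>u. LINT t:{-u..- inverse u}|lborel. g t) \<longlongrightarrow> Lm) at_top"
      using Lim_transform_eventually[OF _ ev] by simp
  qed
  have "(\<integral>t. g t \<partial>lborel) = (\<integral>t. indicator {..<0} t *\<^sub>R g t + indicator {0<..} t *\<^sub>R g t \<partial>lborel)"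
    by (rule integral_cong_AE) (auto intro!: eventually_mono[OF AE_lborel_singleton[of 0]] simp: indicator_def)
  also have "\<dots> = (LINT t:{..<0}|lborel. g t) + (LINT t:{0<..}|lborel. g t)"
    unfolding set_lebesgue_integral_def
    using gs[of "{..<0}"] gs[of "{0<..}"] unfolding set_integrable_def
    by (intro Bochner_Integration.integral_add) auto
  also have "\<dots> = Lm - Lp" using L R by simp
  finally show ?thesis unfolding g_def Lm_def Lp_def .
qed
lemma alg0:
  fixes a b c d p1 p2 q1 q2 e ce ca cb cc cd cp1 cp2 cq1 cq2 J1 J2 :: complex
  assumes "e * ce = 1" 
    and "J1 + J2 = a*cc - (e*(a + \<i>*p1) + \<i>*p2)*(ce*(cc - \<i>*cq1) - \<i>*cq2)"
  shows "\<i>*J1 + (a + \<i>/2*p1)*cq1 + ((e*(a + \<i>*p1) + \<i>*p2) - \<i>/2*p2)*cq2 = -\<i>*J2 + (cc - \<i>/2*cq1)*p1 + ((ce*(cc - \<i>*cq1) - \<i>*cq2) + \<i>/2*cq2)*p2"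
proof -
  have J1: "J1 = a*cc - (e*(a + \<i>*p1) + \<i>*p2)*(ce*(cc - \<i>*cq1) - \<i>*cq2) - J2" using assms(2) by (simp add: algebra_simps)
  have "(\<i>*J1 + (a + \<i>/2*p1)*cq1 + ((e*(a + \<i>*p1) + \<i>*p2) - \<i>/2*p2)*cq2) - (-\<i>*J2 + (cc - \<i>/2*cq1)*p1 + ((ce*(cc - \<i>*cq1) - \<i>*cq2) + \<i>/2*cq2)*p2)
     = \<i>*(a + \<i>*p1)*(cc - \<i>*cq1)*(1 - e*ce)"
    unfolding J1 by (simp add: algebra_simps)
  thus ?thesis using assms(1) by simp
qed

lemma ip_sym: "ip g f = cnj (ip f g)"
  unfolding ip_def using Bochner_Integration.integral_cnj[of lborel "\<lambda>x. f x * cnj (g x)"]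
  by (simp add: mult.commute)

lemma ip_lin3: assumes "L2 f" "L2 g" "L2 h" "L2 k"
  shows "ip (\<lambda>x. a * f x + b * g x + c * h x) k = a * ip f k + b * ip g k + c * ip h k"
proof -
  have i1: "integrable lborel (\<lambda>x. a * (f x * cnj (k x)))" using L2_ip_int[OF assms(1,4)] by (rule integrable_mult_right)
  have i2: "integrable lborel (\<lambda>x. b * (g x * cnj (k x)))" using L2_ip_int[OF assms(2,4)] by (rule integrable_mult_right)
  have i3: "integrable lborel (\<lambda>x. c * (h x * cnj (k x)))" using L2_ip_int[OF assms(3,4)] by (rule integrable_mult_right)
  have "ip (\<lambda>x. a * f x + b * g x + c * h x) k = (\<integral>x. a * (f x * cnj (k x)) + b * (g x * cnj (k x)) + c * (h x * cnj (k x)) \<partial>lborel)"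
    unfolding ip_def by (simp add: algebra_simps)
  also have "\<dots> = (\<integral>x. a * (f x * cnj (k x)) \<partial>lborel) + (\<integral>x. b * (g x * cnj (k x)) \<partial>lborel) + (\<integral>x. c * (h x * cnj (k x)) \<partial>lborel)"
    using i1 i2 i3 by (simp add: Bochner_Integration.integral_add)
  also have "\<dots> = a * ip f k + b * ip g k + c * ip h k"
    unfolding ip_def by (simp only: integral_mult_right_zero)
  finally show ?thesis .
qed

lemma W21_L2: "W21_Omega psi \<Longrightarrow> L2 psi" unfolding W21_Omega_def by simp

lemma part2:
  assumes v: "L2 v1" "L2 v2" and d: "is_deriv_Omega psi dpsi"
  shows "L2 (A_op v1 v2 psi dpsi)"
proof -
  have "A_op v1 v2 psi dpsi = (\<lambda>x. \<i> * dpsi x + (lim_minus0 psi + (\<i>/2) * ip psi v1) * v1 x + (lim_plus0 psi - (\<i>/2) * ip psi v2) * v2 x)"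
    unfolding A_op_def by (auto simp: mult.commute)
  thus ?thesis using v deriv_L2[OF d] by (simp add: L2_add L2_cmult)
qed

lemma part3:
  assumes v: "L2 v1" "L2 v2" and psi: "psi \<in> dom_A v1 v2 \<alpha>" and phi: "phi \<in> dom_A v1 v2 \<alpha>"
    and d1: "is_deriv_Omega psi dpsi" and d2: "is_deriv_Omega phi dphi"
  shows "ip (A_op v1 v2 psi dpsi) phi = ip psi (A_op v1 v2 phi dphi)"
proof -
  have l1: "L2 psi" and l2: "L2 phi" using psi phi unfolding dom_A_def W21_Omega_def by auto
  define e where "e = exp (\<i> * complex_of_real \<alpha>)"
  have bc1: "lim_plus0 psi = e * (lim_minus0 psi + \<i> * ip psi v1) + \<i> * ip psi v2"
    using psi unfolding dom_A_def e_def by (simp add: algebra_simps)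
  have bc2: "lim_plus0 phi = e * (lim_minus0 phi + \<i> * ip phi v1) + \<i> * ip phi v2"
    using phi unfolding dom_A_def e_def by (simp add: algebra_simps)
  have ee: "e * cnj e = 1"
  proof -
    have "cmod e = 1" unfolding e_def by (rule norm_exp_i_times)
    thus ?thesis using complex_norm_square[of e] by simp
  qed
  define c1 where "c1 = lim_minus0 psi + (\<i>/2) * ip psi v1"
  define c2 where "c2 = lim_plus0 psi - (\<i>/2) * ip psi v2"
  define d1' where "d1' = lim_minus0 phi + (\<i>/2) * ip phi v1"
  define d2' where "d2' = lim_plus0 phi - (\<i>/2) * ip phi v2"
  have Apsi: "A_op v1 v2 psi dpsi = (\<lambda>x. \<i> * dpsi x + c1 * v1 x + c2 * v2 x)"
    unfolding A_op_def c1_def c2_def by (auto simp: mult.commute)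
  have Aphi: "A_op v1 v2 phi dphi = (\<lambda>x. \<i> * dphi x + d1' * v1 x + d2' * v2 x)"
    unfolding A_op_def d1'_def d2'_def by (auto simp: mult.commute)
  have L: "ip (A_op v1 v2 psi dpsi) phi = \<i> * ip dpsi phi + c1 * cnj (ip phi v1) + c2 * cnj (ip phi v2)"
    unfolding Apsi using ip_lin3[OF deriv_L2[OF d1] v l2] ip_sym[of v1 phi] ip_sym[of v2 phi] by simp
  have R: "ip psi (A_op v1 v2 phi dphi) = - \<i> * ip psi dphi + cnj d1' * ip psi v1 + cnj d2' * ip psi v2"
  proof -
    have "ip psi (A_op v1 v2 phi dphi) = cnj (ip (A_op v1 v2 phi dphi) psi)" by (rule ip_sym)
    also have "\<dots> = cnj (\<i> * ip dphi psi + d1' * ip v1 psi + d2' * ip v2 psi)"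
      unfolding Aphi using ip_lin3[OF deriv_L2[OF d2] v l1] by simp
    also have "\<dots> = - \<i> * ip psi dphi + cnj d1' * ip psi v1 + cnj d2' * ip psi v2"
      using ip_sym[of psi dphi] ip_sym[of psi v1] ip_sym[of psi v2] by simp
    finally show ?thesis .
  qed
  have J: "ip dpsi phi + ip psi dphi = lim_minus0 psi * cnj (lim_minus0 phi) - lim_plus0 psi * cnj (lim_plus0 phi)"
  proof -
    have "ip dpsi phi + ip psi dphi = (\<integral>t. dpsi t * cnj (phi t) + psi t * cnj (dphi t) \<partial>lborel)"
      unfolding ip_def using L2_ip_int[OF deriv_L2[OF d1] l2] L2_ip_int[OF l1 deriv_L2[OF d2]]
      by (simp add: Bochner_Integration.integral_add)
    also have "\<dots> = lim_minus0 psi * cnj (lim_minus0 phi) - lim_plus0 psi * cnj (lim_plus0 phi)"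
      by (rule W_ibp[OF d1 d2 l1 l2])
    finally show ?thesis .
  qed
  have J': "ip dpsi phi + ip psi dphi = lim_minus0 psi * cnj (lim_minus0 phi)
     - (e * (lim_minus0 psi + \<i> * ip psi v1) + \<i> * ip psi v2) *
       (cnj e * (cnj (lim_minus0 phi) - \<i> * cnj (ip phi v1)) - \<i> * cnj (ip phi v2))"
    using J unfolding bc1 bc2 by simp
  have "\<i> * ip dpsi phi + (lim_minus0 psi + \<i>/2 * ip psi v1) * cnj (ip phi v1)
      + ((e * (lim_minus0 psi + \<i> * ip psi v1) + \<i> * ip psi v2) - \<i>/2 * ip psi v2) * cnj (ip phi v2)
      = - \<i> * ip psi dphi + (cnj (lim_minus0 phi) - \<i>/2 * cnj (ip phi v1)) * ip psi v1
      + ((cnj e * (cnj (lim_minus0 phi) - \<i> * cnj (ip phi v1)) - \<i> * cnj (ip phi v2)) + \<i>/2 * cnj (ip phi v2)) * ip psi v2"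
    by (rule alg0[OF ee J'])
  moreover have "cnj d1' = cnj (lim_minus0 phi) - \<i>/2 * cnj (ip phi v1)" unfolding d1'_def by simp
  moreover have "cnj d2' = (cnj e * (cnj (lim_minus0 phi) - \<i> * cnj (ip phi v1)) - \<i> * cnj (ip phi v2)) + \<i>/2 * cnj (ip phi v2)"
    unfolding d2'_def bc2 by simp
  moreover have "c2 = (e * (lim_minus0 psi + \<i> * ip psi v1) + \<i> * ip psi v2) - \<i>/2 * ip psi v2"
    unfolding c2_def bc1 ..
  ultimately show ?thesis unfolding L R c1_def by simp
qed

definition kk :: "real \<Rightarrow> real \<Rightarrow> complex" where
  "kk \<delta> x = (if x > 0 then complex_of_real (max 0 (1 - x/\<delta>)) else 0)"

definition dkk :: "real \<Rightarrow> real \<Rightarrow> complex" where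
  "dkk \<delta> x = complex_of_real (- (1/\<delta>) * indicator {0..\<delta>} x)"

lemma meas_Icc_gen: "measure lborel {a..b::real} = (if a \<le> b then b - a else 0)"
  by auto

lemma kk_deriv: assumes d: "\<delta> > 0" shows "is_deriv_Omega (kk \<delta>) (dkk \<delta>)"
  unfolding is_deriv_Omega_def
proof (intro conjI allI impI)
  show "L2 (dkk \<delta>)" unfolding L2_def
  proof
    show "dkk \<delta> \<in> borel_measurable lborel" unfolding dkk_def by measurable
    have "(cmod (dkk \<delta> x))\<^sup>2 = (1/\<delta>)\<^sup>2 * indicator {0..\<delta>} x" for x
      using d by (cases "x \<in> {0..\<delta>}") (simp_all add: dkk_def power2_eq_square norm_divide)
    hence "(\<lambda>x. (cmod (dkk \<delta> x))\<^sup>2) = (\<lambda>x. (1/\<delta>)\<^sup>2 * indicator {0..\<delta>} x)" by auto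
    moreover have "integrable lborel (\<lambda>x. (1/\<delta>)\<^sup>2 * indicator {0..\<delta>} x :: real)"
      by (intro integrable_mult_right) (simp add: integrable_indicator_iff emeasure_lborel_Icc_eq)
    ultimately show "integrable lborel (\<lambda>x. (cmod (dkk \<delta> x))\<^sup>2)" by simp
  qed
  fix x y :: real assume h: "x \<le> y \<and> (0 < x \<or> y < 0)"
  have "(LINT t:{x..y}|lborel. dkk \<delta> t) = (\<integral>t. complex_of_real (- (1/\<delta>) * indicator ({x..y} \<inter> {0..\<delta>}) t) \<partial>lborel)"
    unfolding set_lebesgue_integral_def dkk_def
    by (intro Bochner_Integration.integral_cong) (auto simp: indicator_def)
  also have "\<dots> = complex_of_real (- (1/\<delta>) * measure lborel ({x..y} \<inter> {0..\<delta>}))"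
    by (simp del: Int_atLeastAtMost)
  also have "\<dots> = kk \<delta> y - kk \<delta> x"
  proof (cases "y < 0")
    case True
    thus ?thesis using h by (simp add: kk_def)
  next
    case False
    hence x0: "0 < x" using h by auto
    have "measure lborel ({x..y} \<inter> {0..\<delta>}) = (if x \<le> min y \<delta> then min y \<delta> - x else 0)"
      using x0 by (simp add: meas_Icc_gen del: measure_lborel_Icc)
    moreover have key: "-(1/\<delta>) * (if x \<le> min y \<delta> then min y \<delta> - x else 0) = max 0 (1 - y/\<delta>) - max 0 (1 - x/\<delta>)"
    proof -
      have f1: "z \<le> \<delta> \<Longrightarrow> max 0 (1 - z/\<delta>) = 1 - z/\<delta>" for z using d by (simp add: field_simps)
      have f2: "\<delta> < z \<Longrightarrow> max 0 (1 - z/\<delta>) = 0" for z using d by (simp add: field_simps)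
      show ?thesis
      proof (cases "y \<le> \<delta>")
        case True
        thus ?thesis using h f1[of x] f1[of y] d by (simp add: field_simps)
      next
        case False
        note F = this
        show ?thesis
        proof (cases "x \<le> \<delta>")
          case True
          thus ?thesis using F f1[of x] f2[of y] d by (simp add: field_simps)
        next
          case False
          thus ?thesis using F f2[of x] f2[of y] d by simp
        qed
      qed
    qed
    ultimately show ?thesis using x0 h by (simp add: kk_def)
  qed
  finally show "kk \<delta> y - kk \<delta> x = (LINT t:{x..y}|lborel. dkk \<delta> t)" ..
qed

lemma kk_bound: assumes d: "\<delta> > 0" shows "(cmod (kk \<delta> x))\<^sup>2 \<le> indicator {0..\<delta>} x"
proof (cases "x > 0")
  case True
  show ?thesis
  proof (cases "x \<le> \<delta>")
    case True
    have "0 \<le> max 0 (1 - x/\<delta>)" "max 0 (1 - x/\<delta>) \<le> 1" using \<open>x > 0\<close> d by auto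
    hence "(max 0 (1 - x/\<delta>))\<^sup>2 \<le> 1" by (simp add: power_le_one)
    moreover have "kk \<delta> x = complex_of_real (max 0 (1 - x/\<delta>))" using \<open>x > 0\<close> by (simp add: kk_def)
    hence "(cmod (kk \<delta> x))\<^sup>2 = (max 0 (1 - x/\<delta>))\<^sup>2" by (simp only: norm_of_real power2_abs)
    ultimately show ?thesis using True \<open>x > 0\<close> by simp
  next
    case False
    hence "max 0 (1 - x/\<delta>) = 0" using d by (simp add: field_simps)
    thus ?thesis using \<open>x > 0\<close> by (simp add: kk_def)
  qed
qed (simp add: kk_def)

lemma kk_meas[measurable]: "kk \<delta> \<in> borel_measurable borel"
  unfolding kk_def by measurable

lemma kk_L2: assumes "\<delta> > 0" shows "L2 (kk \<delta>)" and "(\<integral>x. (cmod (kk \<delta> x))\<^sup>2 \<partial>lborel) \<le> \<delta>"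
proof -
  have ii: "integrable lborel (indicator {0..\<delta>} :: real \<Rightarrow> real)"
    by (simp add: integrable_indicator_iff emeasure_lborel_Icc_eq)
  show L: "L2 (kk \<delta>)" unfolding L2_def
  proof
    show "kk \<delta> \<in> borel_measurable lborel" by simp
    show "integrable lborel (\<lambda>x. (cmod (kk \<delta> x))\<^sup>2)"
      by (rule Bochner_Integration.integrable_bound[OF ii]) (auto intro!: AE_I2 simp: kk_bound[OF assms])
  qed
  have "(\<integral>x. (cmod (kk \<delta> x))\<^sup>2 \<partial>lborel) \<le> (\<integral>x. indicator {0..\<delta>} x \<partial>lborel)"
    by (intro integral_mono L2_int[OF L] ii kk_bound[OF assms])
  thus "(\<integral>x. (cmod (kk \<delta> x))\<^sup>2 \<partial>lborel) \<le> \<delta>" using assms by simp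
qed

lemma lim_plus0_eq: "(f \<longlongrightarrow> L) (at_right 0) \<Longrightarrow> lim_plus0 f = L"
  unfolding lim_plus0_def by (rule tendsto_Lim) auto

lemma lim_minus0_eq: "(f \<longlongrightarrow> L) (at_left 0) \<Longrightarrow> lim_minus0 f = L"
  unfolding lim_minus0_def by (rule tendsto_Lim) auto

lemma kk_right: assumes "\<delta> > 0" shows "(kk \<delta> \<longlongrightarrow> 1) (at_right 0)"
proof -
  have "((\<lambda>x. complex_of_real (1 - x/\<delta>)) \<longlongrightarrow> complex_of_real (1 - 0/\<delta>)) (at_right 0)"
    using assms by (intro tendsto_intros) auto
  hence l: "((\<lambda>x. complex_of_real (1 - x/\<delta>)) \<longlongrightarrow> 1) (at_right 0)" by simp
  have ev: "\<forall>\<^sub>F x in at_right 0. complex_of_real (1 - x/\<delta>) = kk \<delta> x"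
  proof (rule eventually_mono[OF eventually_at_right_real[of 0 \<delta>, OF assms]])
    fix x assume "x \<in> {0<..<\<delta>}"
    thus "complex_of_real (1 - x/\<delta>) = kk \<delta> x" using assms by (auto simp: kk_def field_simps)
  qed
  show ?thesis by (rule Lim_transform_eventually[OF l ev])
qed

lemma kk_left: "(kk \<delta> \<longlongrightarrow> 0) (at_left 0)"
proof -
  have ev: "\<forall>\<^sub>F x in at_left 0. 0 = kk \<delta> x"
    by (rule eventually_mono[OF eventually_at_left_real[of "-1" 0]]) (auto simp: kk_def)
  show ?thesis by (rule Lim_transform_eventually[OF tendsto_const ev])
qed

lemma amgm_t: fixes a b t :: real assumes "t > 0" shows "a * b \<le> (t * a\<^sup>2 + b\<^sup>2 / t) / 2" 
proof -
  have "(t * a\<^sup>2 + b\<^sup>2 / t) / 2 - a * b = (t * a - b)\<^sup>2 / (2 * t)"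
    using assms by (simp add: field_simps power2_eq_square)
  moreover have "(t * a - b)\<^sup>2 / (2 * t) \<ge> 0" using assms by simp
  ultimately show ?thesis by linarith
qed

lemma ip_bound_t: assumes "L2 f" "L2 g" "t > 0"
  shows "cmod (ip f g) \<le> (t * (\<integral>x. (cmod (f x))\<^sup>2 \<partial>lborel) + (\<integral>x. (cmod (g x))\<^sup>2 \<partial>lborel) / t) / 2"
proof -
  have "cmod (ip f g) \<le> (\<integral>x. cmod (f x * cnj (g x)) \<partial>lborel)" unfolding ip_def
    by (rule integral_norm_bound)
  also have "\<dots> \<le> (\<integral>x. (t * (cmod (f x))\<^sup>2 + (cmod (g x))\<^sup>2 / t) / 2 \<partial>lborel)"
  proof (rule integral_mono)
    show "integrable lborel (\<lambda>x. cmod (f x * cnj (g x)))" using L2_ip_int[OF assms(1,2)] by (rule integrable_norm)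
    show "integrable lborel (\<lambda>x. (t * (cmod (f x))\<^sup>2 + (cmod (g x))\<^sup>2 / t) / 2)"
      using L2_int[OF assms(1)] L2_int[OF assms(2)]
      by (intro integrable_divide_zero Bochner_Integration.integrable_add integrable_mult_right) auto
    fix x show "cmod (f x * cnj (g x)) \<le> (t * (cmod (f x))\<^sup>2 + (cmod (g x))\<^sup>2 / t) / 2"
      using amgm_t[OF assms(3), of "cmod (f x)" "cmod (g x)"] by (simp add: norm_mult)
  qed
  also have "\<dots> = (t * (\<integral>x. (cmod (f x))\<^sup>2 \<partial>lborel) + (\<integral>x. (cmod (g x))\<^sup>2 \<partial>lborel) / t) / 2"
    using L2_int[OF assms(1)] L2_int[OF assms(2)] by simp
  finally show ?thesis .
qed

lemma ip_add_c: assumes "L2 f" "L2 h" "L2 v"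
  shows "ip (\<lambda>x. f x + c * h x) v = ip f v + c * ip h v"
proof -
  have "ip (\<lambda>x. f x + c * h x) v = (\<integral>x. f x * cnj (v x) + c * (h x * cnj (v x)) \<partial>lborel)"
    unfolding ip_def by (simp add: algebra_simps)
  also have "\<dots> = ip f v + c * ip h v" unfolding ip_def
    using L2_ip_int[OF assms(1,3)] L2_ip_int[OF assms(2,3)] by simp
  finally show ?thesis .
qed

lemma W21_add_c: assumes "W21_Omega f" "W21_Omega h" shows "W21_Omega (\<lambda>x. f x + c * h x)"
proof -
  obtain df dh where "is_deriv_Omega f df" "is_deriv_Omega h dh" using assms unfolding W21_Omega_def by blast
  hence "is_deriv_Omega (\<lambda>x. f x + c * h x) (\<lambda>x. df x + c * dh x)" by (intro deriv_add deriv_cmult)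
  moreover have "L2 (\<lambda>x. f x + c * h x)" using assms by (intro L2_add L2_cmult W21_L2)
  ultimately show ?thesis unfolding W21_Omega_def by blast
qed

lemma kk_W21: "\<delta> > 0 \<Longrightarrow> W21_Omega (kk \<delta>)"
  unfolding W21_Omega_def using kk_L2 kk_deriv by blast

lemma avg18: fixes A X Y :: real shows "A \<le> (X+Y)/2 \<Longrightarrow> X \<le> 1/8 \<Longrightarrow> Y \<le> 1/8 \<Longrightarrow> A \<le> 1/8" by (simp add: field_simps)

lemma stepB:
  assumes v: "L2 v1" "L2 v2" and g: "W21_Omega g" and eps: "\<epsilon> > 0"
  shows "\<exists>psi\<in>dom_A v1 v2 \<alpha>. (\<integral>x. (cmod (g x - psi x))\<^sup>2 \<partial>lborel) < \<epsilon>"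
proof -
  obtain dg where dg: "is_deriv_Omega g dg" using g unfolding W21_Omega_def by blast
  have lg: "L2 g" using g by (rule W21_L2)
  define e where "e = exp (\<i> * complex_of_real \<alpha>)"
  have ne: "cmod e = 1" unfolding e_def by (rule norm_exp_i_times)
  define D where "D = e * (lim_minus0 g + \<i> * ip g v1) - lim_plus0 g + \<i> * ip g v2"
  define V1 where "V1 = (\<integral>x. (cmod (v1 x))\<^sup>2 \<partial>lborel)"
  define V2 where "V2 = (\<integral>x. (cmod (v2 x))\<^sup>2 \<partial>lborel)"
  have V1: "V1 \<ge> 0" "V2 \<ge> 0" unfolding V1_def V2_def by auto
  define t where "t = 8 * (V1 + V2) + 8"
  have t: "t > 0" using V1 unfolding t_def by simp
  define \<delta> where "\<delta> = min (1 / (8 * t)) (\<epsilon> / (8 * (cmod D)\<^sup>2 + 1))"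
  have "8 * (cmod D)\<^sup>2 + 1 > 0" by (simp add: add_nonneg_pos)
  hence d: "\<delta> > 0" unfolding \<delta>_def using t eps by simp
  have td: "t * \<delta> \<le> 1/8"
  proof -
    have "\<delta> \<le> 1 / (8 * t)" unfolding \<delta>_def by simp
    hence "\<delta> * (8 * t) \<le> 1" using t by (simp add: le_divide_eq)
    thus ?thesis by (simp add: algebra_simps)
  qed
  have Dd: "2 * (cmod D)\<^sup>2 * \<delta> < \<epsilon>"
  proof -
    have "\<delta> \<le> \<epsilon> / (8 * (cmod D)\<^sup>2 + 1)" unfolding \<delta>_def by simp
    hence "(8 * (cmod D)\<^sup>2 + 1) * \<delta> \<le> \<epsilon>" by (simp add: field_simps add_pos_nonneg)
    moreover have "(8 * (cmod D)\<^sup>2 + 1) * \<delta> = 8 * ((cmod D)\<^sup>2 * \<delta>) + \<delta>" by (simp add: algebra_simps)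
    moreover have "0 \<le> (cmod D)\<^sup>2 * \<delta>" using d by simp
    moreover have "2 * (cmod D)\<^sup>2 * \<delta> = 2 * ((cmod D)\<^sup>2 * \<delta>)" by simp
    ultimately show ?thesis using d by linarith
  qed
  define k where "k = kk \<delta>"
  have lk: "L2 k" and nk: "(\<integral>x. (cmod (k x))\<^sup>2 \<partial>lborel) \<le> \<delta>" unfolding k_def using kk_L2[OF d] by auto
  have nk0: "(\<integral>x. (cmod (k x))\<^sup>2 \<partial>lborel) \<ge> 0" by simp
  have ipk: "cmod (ip k v) \<le> 1/8" if "L2 v" "(\<integral>x. (cmod (v x))\<^sup>2 \<partial>lborel) \<le> V1 + V2" for v
  proof -
    have "cmod (ip k v) \<le> (t * (\<integral>x. (cmod (k x))\<^sup>2 \<partial>lborel) + (\<integral>x. (cmod (v x))\<^sup>2 \<partial>lborel) / t) / 2"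
      by (rule ip_bound_t[OF lk that(1) t])
    moreover have "t * (\<integral>x. (cmod (k x))\<^sup>2 \<partial>lborel) \<le> 1/8"
    proof -
      have "t * (\<integral>x. (cmod (k x))\<^sup>2 \<partial>lborel) \<le> t * \<delta>" using nk t by (intro mult_left_mono) auto
      thus ?thesis using td by linarith
    qed
    moreover have "(\<integral>x. (cmod (v x))\<^sup>2 \<partial>lborel) / t \<le> 1/8"
      using that(2) t V1 unfolding t_def by (simp add: field_simps)
    ultimately show ?thesis by (rule avg18)
  qed
  have ik1: "cmod (ip k v1) \<le> 1/8" using ipk[OF v(1)] V1 unfolding V1_def by simp
  have ik2: "cmod (ip k v2) \<le> 1/8" using ipk[OF v(2)] V1 unfolding V2_def by simp
  define \<kappa> where "\<kappa> = 1 - \<i> * ip k v2 - \<i> * e * ip k v1"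
  have kap: "cmod \<kappa> \<ge> 3/4"
  proof -
    have "cmod (\<i> * ip k v2 + \<i> * e * ip k v1) \<le> cmod (\<i> * ip k v2) + cmod (\<i> * e * ip k v1)"
      by (rule norm_triangle_ineq)
    also have "\<dots> = cmod (ip k v2) + cmod (ip k v1)" by (simp add: norm_mult ne)
    finally have "cmod (\<i> * ip k v2 + \<i> * e * ip k v1) \<le> 1/4" using ik1 ik2 by simp
    moreover have "1 \<le> cmod \<kappa> + cmod (\<i> * ip k v2 + \<i> * e * ip k v1)"
      using norm_triangle_ineq[of \<kappa> "\<i> * ip k v2 + \<i> * e * ip k v1"] unfolding \<kappa>_def by simp
    ultimately show ?thesis by simp
  qed
  hence kap0: "\<kappa> \<noteq> 0" by auto
  define c where "c = D / \<kappa>"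
  have cD: "cmod c \<le> 4/3 * cmod D"
  proof -
    have "cmod c = cmod D / cmod \<kappa>" unfolding c_def by (simp add: norm_divide)
    also have "\<dots> \<le> cmod D / (3/4)" using kap by (intro divide_left_mono) auto
    finally show ?thesis by simp
  qed
  define psi where "psi = (\<lambda>x. g x + c * k x)"
  have Wpsi: "W21_Omega psi" unfolding psi_def k_def using g kk_W21[OF d] by (rule W21_add_c)
  have lp: "lim_plus0 psi = lim_plus0 g + c"
  proof -
    have "(psi \<longlongrightarrow> lim_plus0 g + c * 1) (at_right 0)"
      unfolding psi_def k_def using W_lim_plus0[OF dg] kk_right[OF d]
      by (intro tendsto_intros)
    thus ?thesis by (intro lim_plus0_eq) simp
  qed
  have lm: "lim_minus0 psi = lim_minus0 g"
  proof -
    have "(psi \<longlongrightarrow> lim_minus0 g + c * 0) (at_left 0)"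
      unfolding psi_def k_def using W_lim_minus0[OF dg] kk_left
      by (intro tendsto_intros)
    thus ?thesis by (intro lim_minus0_eq) simp
  qed
  have ip1: "ip psi v1 = ip g v1 + c * ip k v1" unfolding psi_def by (rule ip_add_c[OF lg lk v(1)])
  have ip2: "ip psi v2 = ip g v2 + c * ip k v2" unfolding psi_def by (rule ip_add_c[OF lg lk v(2)])
  have cK: "c * \<kappa> = D" unfolding c_def using kap0 by simp
  have "lim_plus0 psi - \<i> * ip psi v2 = e * (lim_minus0 psi + \<i> * ip psi v1)"
    unfolding lp lm ip1 ip2 using cK unfolding \<kappa>_def D_def by (simp add: algebra_simps)
  hence mem: "psi \<in> dom_A v1 v2 \<alpha>" unfolding dom_A_def e_def using Wpsi by simp
  have "(\<integral>x. (cmod (g x - psi x))\<^sup>2 \<partial>lborel) = (\<integral>x. (cmod c)\<^sup>2 * (cmod (k x))\<^sup>2 \<partial>lborel)"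
    unfolding psi_def by (simp add: norm_mult power_mult_distrib)
  also have "\<dots> = (cmod c)\<^sup>2 * (\<integral>x. (cmod (k x))\<^sup>2 \<partial>lborel)" by simp
  also have "\<dots> \<le> (4/3 * cmod D)\<^sup>2 * \<delta>"
    using nk nk0 cD by (intro mult_mono power_mono) auto
  also have "\<dots> \<le> 2 * (cmod D)\<^sup>2 * \<delta>"
  proof -
    have "(4/3 * cmod D)\<^sup>2 = 16/9 * (cmod D)\<^sup>2" by (simp add: power_mult_distrib power2_eq_square)
    also have "\<dots> \<le> 2 * (cmod D)\<^sup>2" by simp
    finally show ?thesis using d by (intro mult_right_mono) auto
  qed
  also have "\<dots> < \<epsilon>" by (rule Dd)
  finally show ?thesis using mem by blast
qed

lemma dist2_tri: assumes "L2 f" "L2 g" "L2 h"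
  shows "(\<integral>x. (cmod (f x - h x))\<^sup>2 \<partial>lborel) \<le> 2 * (\<integral>x. (cmod (f x - g x))\<^sup>2 \<partial>lborel) + 2 * (\<integral>x. (cmod (g x - h x))\<^sup>2 \<partial>lborel)"
proof -
  have i1: "integrable lborel (\<lambda>x. (cmod (f x - g x))\<^sup>2)" using assms by (intro L2_int L2_diff)
  have i2: "integrable lborel (\<lambda>x. (cmod (g x - h x))\<^sup>2)" using assms by (intro L2_int L2_diff)
  have "(\<integral>x. (cmod (f x - h x))\<^sup>2 \<partial>lborel) \<le> (\<integral>x. 2 * (cmod (f x - g x))\<^sup>2 + 2 * (cmod (g x - h x))\<^sup>2 \<partial>lborel)"
  proof (rule integral_mono)
    show "integrable lborel (\<lambda>x. (cmod (f x - h x))\<^sup>2)" using assms by (intro L2_int L2_diff)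
    show "integrable lborel (\<lambda>x. 2 * (cmod (f x - g x))\<^sup>2 + 2 * (cmod (g x - h x))\<^sup>2)"
      using i1 i2 by (intro Bochner_Integration.integrable_add integrable_mult_right)
    fix x show "(cmod (f x - h x))\<^sup>2 \<le> 2 * (cmod (f x - g x))\<^sup>2 + 2 * (cmod (g x - h x))\<^sup>2"
      using sq_add_le[of "f x - g x" "g x - h x"] by simp
  qed
  also have "\<dots> = 2 * (\<integral>x. (cmod (f x - g x))\<^sup>2 \<partial>lborel) + 2 * (\<integral>x. (cmod (g x - h x))\<^sup>2 \<partial>lborel)"
    using i1 i2 by simp
  finally show ?thesis .
qed

definition approx :: "(real \<Rightarrow> complex) \<Rightarrow> bool" where
  "approx f \<longleftrightarrow> L2 f \<and> (\<forall>\<epsilon>>0. \<exists>g. W21_Omega g \<and> (\<integral>x. (cmod (f x - g x))\<^sup>2 \<partial>lborel) < \<epsilon>)"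


lemma set_int_translate:
  fixes \<phi> :: "real \<Rightarrow> complex"
  shows "(LINT t:{x..y}|lborel. \<phi> (t + c)) = (LINT t:{x+c..y+c}|lborel. \<phi> t)"
proof -
  have "(LINT t:{x+c..y+c}|lborel. \<phi> t) = (\<integral>s. indicator {x+c..y+c} (c + 1 * s) *\<^sub>R \<phi> (c + 1 * s) \<partial>lborel)"
    unfolding set_lebesgue_integral_def
    using lborel_integral_real_affine[where c=1 and t=c and f="\<lambda>s. indicator {x+c..y+c} s *\<^sub>R \<phi> s"] by simp
  also have "\<dots> = (LINT t:{x..y}|lborel. \<phi> (t + c))"
    unfolding set_lebesgue_integral_def
    by (intro Bochner_Integration.integral_cong) (auto simp: indicator_def add.commute)
  finally show ?thesis ..
qed

lemma L2_translate: assumes "L2 \<phi>" shows "L2 (\<lambda>t. \<phi> (t + c))"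
  unfolding L2_def
proof
  show "(\<lambda>t. \<phi> (t + c)) \<in> borel_measurable lborel" using L2_meas[OF assms] by measurable
  have "integrable lborel (\<lambda>t. (cmod (\<phi> (c + 1 * t)))\<^sup>2)"
    using lborel_integrable_real_affine_iff[of 1 "\<lambda>t. (cmod (\<phi> t))\<^sup>2" c] L2_int[OF assms] by simp
  thus "integrable lborel (\<lambda>t. (cmod (\<phi> (t + c)))\<^sup>2)" by (simp add: add.commute)
qed

lemma set_int_split:
  fixes \<phi> :: "real \<Rightarrow> complex"
  assumes "L2 \<phi>" "a \<le> b" "b \<le> c"
  shows "(LINT t:{a..c}|lborel. \<phi> t) = (LINT t:{a..b}|lborel. \<phi> t) + (LINT t:{b..c}|lborel. \<phi> t)"
proof -
  have m[measurable]: "\<phi> \<in> borel_measurable borel" using L2_meas[OF assms(1)] .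
  have "(LINT t:{a..c}|lborel. \<phi> t) = (\<integral>t. indicator {a..b} t *\<^sub>R \<phi> t + indicator {b..c} t *\<^sub>R \<phi> t \<partial>lborel)"
    unfolding set_lebesgue_integral_def
    by (rule integral_cong_AE) (use assms in \<open>auto intro!: eventually_mono[OF AE_lborel_singleton[of b]] simp: indicator_def\<close>)
  also have "\<dots> = (LINT t:{a..b}|lborel. \<phi> t) + (LINT t:{b..c}|lborel. \<phi> t)"
    unfolding set_lebesgue_integral_def
    using L2_set_int[OF assms(1), of a b] L2_set_int[OF assms(1), of b c] unfolding set_integrable_def
    by (rule Bochner_Integration.integral_add)
  finally show ?thesis .
qed

lemma set_int_const: "(LINT t:{a..b}|lborel. (k::complex)) = of_real (measure lborel {a..b}) * k"
  unfolding set_lebesgue_integral_def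
  using integral_scaleR_left[of k lborel "indicator {a..b}"]
  by (simp add: scaleR_conv_of_real)

lemma set_int_norm_le:
  fixes f :: "real \<Rightarrow> complex"
  assumes si: "set_integrable lborel {a..b} f" and "a \<le> b" "\<And>t. t \<in> {a..b} \<Longrightarrow> cmod (f t) \<le> B"
  shows "cmod (LINT t:{a..b}|lborel. f t) \<le> B * (b - a)"
proof -
  have "cmod (LINT t:{a..b}|lborel. f t) \<le> (\<integral>t. norm (indicator {a..b} t *\<^sub>R f t) \<partial>lborel)"
    unfolding set_lebesgue_integral_def by (rule integral_norm_bound)
  also have "\<dots> \<le> (\<integral>t. indicator {a..b} t * B \<partial>lborel)"
  proof (rule integral_mono)
    show "integrable lborel (\<lambda>t. norm (indicator {a..b} t *\<^sub>R f t))"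
      using si unfolding set_integrable_def by (rule integrable_norm)
    show "integrable lborel (\<lambda>t. indicator {a..b} t * B)"
      by (intro integrable_mult_left) (simp add: integrable_indicator_iff emeasure_lborel_Icc_eq)
    fix t show "norm (indicator {a..b} t *\<^sub>R f t) \<le> indicator {a..b} t * B"
      using assms(3)[of t] by (auto simp: indicator_def)
  qed
  also have "\<dots> = B * (b - a)" using assms(2) by simp
  finally show ?thesis .
qed

lemma avg_approx:
  fixes \<phi> :: "real \<Rightarrow> complex" and L R :: real
  assumes lip: "\<And>x y. cmod (\<phi> x - \<phi> y) \<le> L * \<bar>x - y\<bar>" and L: "L \<ge> 0"
    and bnd: "\<And>x. cmod (\<phi> x) \<le> 1" and supp: "\<And>x. \<bar>x\<bar> > R \<Longrightarrow> \<phi> x = 0" and R: "R \<ge> 0"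
  shows "approx \<phi>"
proof -
  have "L-lipschitz_on UNIV \<phi>" using lip L by (intro lipschitz_onI) (auto simp: dist_norm)
  hence "continuous_on UNIV \<phi>" by (rule lipschitz_on_continuous_on)
  hence pm[measurable]: "\<phi> \<in> borel_measurable borel" by (rule borel_measurable_continuous_onI)
  have ind_int: "integrable lborel (indicator {a..b} :: real \<Rightarrow> real)" for a b
    by (simp add: integrable_indicator_iff emeasure_lborel_Icc_eq)
  have lp: "L2 \<phi>" unfolding L2_def
  proof
    show "\<phi> \<in> borel_measurable lborel" by simp
    show "integrable lborel (\<lambda>x. (cmod (\<phi> x))\<^sup>2)"
    proof (rule Bochner_Integration.integrable_bound[OF ind_int[of "-R" R]])
      show "(\<lambda>x. (cmod (\<phi> x))\<^sup>2) \<in> borel_measurable lborel" by measurable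
      show "AE x in lborel. norm ((cmod (\<phi> x))\<^sup>2) \<le> norm (indicator {-R..R} x :: real)"
      proof (intro AE_I2)
        fix x
        show "norm ((cmod (\<phi> x))\<^sup>2) \<le> norm (indicator {-R..R} x :: real)"
        proof (cases "\<bar>x\<bar> > R")
          case True thus ?thesis using supp[OF True] by simp
        next
          case False
          hence "x \<in> {-R..R}" by auto
          moreover have "(cmod (\<phi> x))\<^sup>2 \<le> 1" using bnd[of x] by (simp add: power_le_one)
          ultimately show ?thesis by simp
        qed
      qed
    qed
  qed
  show ?thesis unfolding approx_def
  proof (intro conjI allI impI lp)
    fix \<epsilon> :: real assume eps: "\<epsilon> > 0"
    define K where "K = 2 * (L + 1)\<^sup>2 * (2 * R + 2)"
    have K: "K > 0" unfolding K_def using R L by (simp add: add_nonneg_pos)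
    define c where "c = min 1 (\<epsilon> / K)"
    have c: "c > 0" "c \<le> 1" unfolding c_def using eps K by auto
    define Iv where "Iv a b = (LINT t:{a..b}|lborel. \<phi> t)" for a b
    define h where "h x = of_real (1/c) * Iv x (x + c)" for x
    define dh where "dh t = of_real (1/c) * (\<phi> (t + c) - \<phi> t)" for t
    have lpc: "L2 (\<lambda>t. \<phi> (t + c))" by (rule L2_translate[OF lp])
    have split: "Iv a e = Iv a b + Iv b e" if "a \<le> b" "b \<le> e" for a b e
      unfolding Iv_def by (rule set_int_split[OF lp that])
    have deriv: "is_deriv_Omega h dh" unfolding is_deriv_Omega_def
    proof (intro conjI allI impI)
      show "L2 dh" unfolding dh_def by (intro L2_cmult L2_diff lpc lp)
      fix x y :: real assume xy: "x \<le> y \<and> (0 < x \<or> y < 0)"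
      have "(LINT t:{x..y}|lborel. dh t) = of_real (1/c) * ((LINT t:{x..y}|lborel. \<phi> (t + c)) - (LINT t:{x..y}|lborel. \<phi> t))"
        unfolding dh_def using L2_set_int[OF lpc, of x y] L2_set_int[OF lp, of x y]
        by (simp add: set_integral_diff)
      also have "\<dots> = of_real (1/c) * (Iv (x + c) (y + c) - Iv x y)"
        unfolding set_int_translate Iv_def ..
      also have "Iv (x + c) (y + c) - Iv x y = Iv y (y + c) - Iv x (x + c)"
      proof -
        have "Iv x (y + c) = Iv x y + Iv y (y + c)" using xy c by (intro split) auto
        moreover have "Iv x (y + c) = Iv x (x + c) + Iv (x + c) (y + c)" using xy c by (intro split) auto
        ultimately show ?thesis by (simp add: algebra_simps)
      qed
      finally show "h y - h x = (LINT t:{x..y}|lborel. dh t)" unfolding h_def by (simp add: algebra_simps)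
    qed
    have hm[measurable]: "h \<in> borel_measurable borel"
    proof -
      have "(\<lambda>x. \<integral>t. of_bool (x \<le> t \<and> t \<le> x + c) *\<^sub>R \<phi> t \<partial>lborel) \<in> borel_measurable borel"
        by measurable
      moreover have "h = (\<lambda>x. of_real (1/c) * (\<integral>t. of_bool (x \<le> t \<and> t \<le> x + c) *\<^sub>R \<phi> t \<partial>lborel))"
        unfolding h_def Iv_def set_lebesgue_integral_def by (auto simp: indicator_def)
      ultimately show ?thesis by simp
    qed
    have zero_out: "Iv x (x + c) = 0" if "x \<notin> {-R-1..R}" for x
    proof -
      have "Iv x (x + c) = (LINT t:{x..x+c}|lborel. 0)" unfolding Iv_def set_lebesgue_integral_def
        using that c by (intro Bochner_Integration.integral_cong) (auto simp: indicator_def intro!: supp)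
      thus ?thesis by simp
    qed
    have hb: "cmod (h x) \<le> 1" for x
    proof -
      have "cmod (Iv x (x + c)) \<le> 1 * (x + c - x)" unfolding Iv_def
        using c by (intro set_int_norm_le L2_set_int[OF lp] bnd) auto
      thus ?thesis unfolding h_def using c by (simp add: norm_mult norm_divide divide_le_eq_1)
    qed
    have hz: "h x = 0" if "x \<notin> {-R-1..R}" for x unfolding h_def using zero_out[OF that] by simp
    have lh: "L2 h" unfolding L2_def
    proof
      show "h \<in> borel_measurable lborel" by simp
      show "integrable lborel (\<lambda>x. (cmod (h x))\<^sup>2)"
      proof (rule Bochner_Integration.integrable_bound[OF ind_int[of "-R-1" R]])
        show "(\<lambda>x. (cmod (h x))\<^sup>2) \<in> borel_measurable lborel" by measurable
        show "AE x in lborel. norm ((cmod (h x))\<^sup>2) \<le> norm (indicator {-R-1..R} x :: real)"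
        proof (intro AE_I2)
          fix x
          show "norm ((cmod (h x))\<^sup>2) \<le> norm (indicator {-R-1..R} x :: real)"
          proof (cases "x \<in> {-R-1..R}")
            case False thus ?thesis using hz[OF False] by simp
          next
            case True
            moreover have "(cmod (h x))\<^sup>2 \<le> 1" using hb[of x] by (simp add: power_le_one)
            ultimately show ?thesis by simp
          qed
        qed
      qed
    qed
    have W: "W21_Omega h" unfolding W21_Omega_def using lh deriv by blast
    have close: "cmod (\<phi> x - h x) \<le> L * c" for x
    proof -
      have si: "set_integrable lborel {x..x+c} \<phi>" by (rule L2_set_int[OF lp])
      have sc: "set_integrable lborel {x..x+c} (\<lambda>t. \<phi> x)"
        unfolding set_integrable_def by (rule integrable_scaleR_left[OF ind_int])
      have "(LINT t:{x..x+c}|lborel. \<phi> t - \<phi> x) = Iv x (x + c) - (LINT t:{x..x+c}|lborel. \<phi> x)"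
        unfolding Iv_def by (rule set_integral_diff(2)[OF si sc])
      also have "(LINT t:{x..x+c}|lborel. \<phi> x) = of_real c * \<phi> x" using c by (simp add: set_int_const)
      finally have eq: "Iv x (x + c) - of_real c * \<phi> x = (LINT t:{x..x+c}|lborel. \<phi> t - \<phi> x)" ..
      have "cmod (LINT t:{x..x+c}|lborel. \<phi> t - \<phi> x) \<le> (L * c) * (x + c - x)"
      proof (rule set_int_norm_le)
        show "set_integrable lborel {x..x + c} (\<lambda>t. \<phi> t - \<phi> x)" using si sc by (rule set_integral_diff(1))
        show "x \<le> x + c" using c by simp
        fix t assume "t \<in> {x..x+c}"
        hence "\<bar>t - x\<bar> \<le> c" by auto
        thus "cmod (\<phi> t - \<phi> x) \<le> L * c" using lip[of t x] L by (meson mult_left_mono order_trans)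
      qed
      hence b: "cmod (Iv x (x + c) - of_real c * \<phi> x) \<le> (L * c) * c" using eq by simp
      have "\<phi> x - h x = - (of_real (1/c) * (Iv x (x + c) - of_real c * \<phi> x))"
        unfolding h_def using c by (simp add: field_simps)
      hence "cmod (\<phi> x - h x) = (1/c) * cmod (Iv x (x + c) - of_real c * \<phi> x)"
        using c by (simp add: norm_mult norm_divide)
      also have "\<dots> \<le> (1/c) * ((L * c) * c)" using b c by (intro mult_left_mono) auto
      also have "\<dots> = L * c" using c by simp
      finally show ?thesis .
    qed
    have pw: "(cmod (\<phi> x - h x))\<^sup>2 \<le> (L * c)\<^sup>2 * indicator {-R-1..R+1} x" for x
    proof (cases "x \<in> {-R-1..R+1}")
      case True
      have "(cmod (\<phi> x - h x))\<^sup>2 \<le> (L * c)\<^sup>2" using close[of x] by (intro power_mono) auto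
      thus ?thesis using True by simp
    next
      case False
      hence "\<phi> x = 0" "h x = 0" using hz[of x] supp[of x] by auto
      thus ?thesis by simp
    qed
    have "(\<integral>x. (cmod (\<phi> x - h x))\<^sup>2 \<partial>lborel) \<le> (\<integral>x. (L * c)\<^sup>2 * indicator {-R-1..R+1} x \<partial>lborel)"
      using pw L2_int[OF L2_diff[OF lp lh]] ind_int by (intro integral_mono) auto
    also have "\<dots> = (L * c)\<^sup>2 * (2 * R + 2)" using R by simp
    also have "\<dots> \<le> (L + 1)\<^sup>2 * c * (2 * R + 2)"
    proof -
      have "(L * c)\<^sup>2 \<le> ((L + 1) * c)\<^sup>2" using L c by (intro power_mono mult_right_mono) auto
      also have "\<dots> = (L + 1)\<^sup>2 * (c * c)" by (simp add: power2_eq_square)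
      also have "\<dots> \<le> (L + 1)\<^sup>2 * c" using c by (intro mult_left_mono) (auto simp: mult_le_cancel_left1)
      finally show ?thesis using R by (intro mult_right_mono) auto
    qed
    also have "\<dots> \<le> (L + 1)\<^sup>2 * (\<epsilon> / K) * (2 * R + 2)"
      using R c_def by (intro mult_right_mono mult_left_mono) auto
    also have "\<dots> = \<epsilon> / 2"
    proof -
      define P where "P = (L + 1)\<^sup>2 * (2 * R + 2)"
      have P: "P > 0" unfolding P_def using L R by (simp add: add_nonneg_pos)
      have "(L + 1)\<^sup>2 * (\<epsilon> / K) * (2 * R + 2) = P * \<epsilon> / (2 * P)"
        unfolding K_def P_def by (simp add: algebra_simps)
      also have "\<dots> = \<epsilon> / 2" using P by simp
      finally show ?thesis .
    qed
    also have "\<dots> < \<epsilon>" using eps by simp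
    finally show "\<exists>g. W21_Omega g \<and> (\<integral>x. (cmod (\<phi> x - g x))\<^sup>2 \<partial>lborel) < \<epsilon>"
      using W by blast
  qed
qed


lemma approx_closure:
  assumes f: "L2 f" and h: "\<And>\<epsilon>. \<epsilon> > 0 \<Longrightarrow> \<exists>h. approx h \<and> (\<integral>x. (cmod (f x - h x))\<^sup>2 \<partial>lborel) < \<epsilon>"
  shows "approx f"
  unfolding approx_def
proof (intro conjI allI impI f)
  fix \<epsilon> :: real assume eps: "\<epsilon> > 0"
  obtain h where h1: "approx h" "(\<integral>x. (cmod (f x - h x))\<^sup>2 \<partial>lborel) < \<epsilon> / 4" using h[of "\<epsilon>/4"] eps by auto
  obtain g where g: "W21_Omega g" "(\<integral>x. (cmod (h x - g x))\<^sup>2 \<partial>lborel) < \<epsilon> / 4"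
    using h1(1) eps unfolding approx_def by (meson zero_less_divide_iff zero_less_numeral)
  have "L2 h" using h1(1) unfolding approx_def by simp
  hence "(\<integral>x. (cmod (f x - g x))\<^sup>2 \<partial>lborel) < \<epsilon>"
    using dist2_tri[OF f _ W21_L2[OF g(1)], of h] h1(2) g(2) by linarith
  thus "\<exists>g. W21_Omega g \<and> (\<integral>x. (cmod (f x - g x))\<^sup>2 \<partial>lborel) < \<epsilon>" using g(1) by blast
qed

lemma approx_add_c:
  assumes f: "approx f" and h: "approx h"
  shows "approx (\<lambda>x. f x + c * h x)"
  unfolding approx_def
proof (intro conjI allI impI)
  have lf: "L2 f" and lh: "L2 h" using f h unfolding approx_def by auto
  show "L2 (\<lambda>x. f x + c * h x)" using lf lh by (intro L2_add L2_cmult)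
  fix \<epsilon> :: real assume eps: "\<epsilon> > 0"
  define C where "C = 4 * ((cmod c)\<^sup>2 + 1)"
  have C: "C > 0" unfolding C_def by (simp add: add_nonneg_pos)
  obtain g1 where g1: "W21_Omega g1" "(\<integral>x. (cmod (f x - g1 x))\<^sup>2 \<partial>lborel) < \<epsilon> / 4"
    using f eps unfolding approx_def by (meson zero_less_divide_iff zero_less_numeral)
  obtain g2 where g2: "W21_Omega g2" "(\<integral>x. (cmod (h x - g2 x))\<^sup>2 \<partial>lborel) < \<epsilon> / C"
    using h eps C unfolding approx_def by (meson divide_pos_pos)
  have lg1: "L2 g1" and lg2: "L2 g2" using g1 g2 by (auto intro: W21_L2)
  define m where "m x = g1 x + c * h x" for x
  have lm: "L2 m" unfolding m_def using lg1 lh by (intro L2_add L2_cmult)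
  have e1: "(\<integral>x. (cmod ((f x + c * h x) - m x))\<^sup>2 \<partial>lborel) = (\<integral>x. (cmod (f x - g1 x))\<^sup>2 \<partial>lborel)"
    unfolding m_def by simp
  have "(\<integral>x. (cmod (m x - (g1 x + c * g2 x)))\<^sup>2 \<partial>lborel) = (\<integral>x. (cmod c)\<^sup>2 * (cmod (h x - g2 x))\<^sup>2 \<partial>lborel)"
    unfolding m_def by (simp add: norm_mult power_mult_distrib right_diff_distrib[symmetric])
  also have "\<dots> = (cmod c)\<^sup>2 * (\<integral>x. (cmod (h x - g2 x))\<^sup>2 \<partial>lborel)" by simp
  also have "\<dots> \<le> (cmod c)\<^sup>2 * (\<epsilon> / C)" using g2(2) by (intro mult_left_mono) auto
  also have "\<dots> \<le> \<epsilon> / 4"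
  proof -
    have "(cmod c)\<^sup>2 * (\<epsilon> / C) = \<epsilon> / 4 * ((cmod c)\<^sup>2 / ((cmod c)\<^sup>2 + 1))" unfolding C_def by (simp add: field_simps)
    also have "\<dots> \<le> \<epsilon> / 4 * 1"
    proof -
      have "(cmod c)\<^sup>2 \<le> (cmod c)\<^sup>2 + 1" by simp
      hence "(cmod c)\<^sup>2 / ((cmod c)\<^sup>2 + 1) \<le> 1" by (simp add: divide_le_eq_1 add_nonneg_pos)
      thus ?thesis using eps by (intro mult_left_mono) auto
    qed
    finally show ?thesis by simp
  qed
  finally have e2: "(\<integral>x. (cmod (m x - (g1 x + c * g2 x)))\<^sup>2 \<partial>lborel) \<le> \<epsilon> / 4" .
  have "(\<integral>x. (cmod ((f x + c * h x) - (g1 x + c * g2 x)))\<^sup>2 \<partial>lborel) < \<epsilon>"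
    using dist2_tri[OF L2_add[OF lf L2_cmult[OF lh]] lm L2_add[OF lg1 L2_cmult[OF lg2]], of c c] e1 e2 g1(2)
    by linarith
  moreover have "W21_Omega (\<lambda>x. g1 x + c * g2 x)" using g1(1) g2(1) by (rule W21_add_c)
  ultimately show "\<exists>g. W21_Omega g \<and> (\<integral>x. (cmod (f x + c * h x - g x))\<^sup>2 \<partial>lborel) < \<epsilon>" by blast
qed

lemma W21_zero: "W21_Omega (\<lambda>x. 0)"
  unfolding W21_Omega_def is_deriv_Omega_def using L2_zero by auto

lemma approx_zero: "approx (\<lambda>x. 0)"
  unfolding approx_def using L2_zero W21_zero by fastforce

lemma approx_sum: assumes "finite S" "\<And>y. y \<in> S \<Longrightarrow> approx (F y)"
  shows "approx (\<lambda>x. \<Sum>y\<in>S. F y x)"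
  using assms
proof (induction S rule: finite_induct)
  case empty thus ?case by (simp add: approx_zero)
next
  case (insert a S)
  have "approx (\<lambda>x. (\<Sum>y\<in>S. F y x) + 1 * F a x)" using insert by (intro approx_add_c) auto
  thus ?case using insert by (simp add: add.commute)
qed

lemma approx_cmult: "approx h \<Longrightarrow> approx (\<lambda>x. c * h x)"
  using approx_add_c[OF approx_zero, of h c] by simp

lemma min1_lip: fixes p q :: real shows "\<bar>min 1 p - min 1 q\<bar> \<le> \<bar>p - q\<bar>"
proof (cases "p \<le> 1"; cases "q \<le> 1")
  assume "p \<le> 1" "q \<le> 1" thus ?thesis by simp
next
  assume "p \<le> 1" "\<not> q \<le> 1" thus ?thesis by (simp add: min_def abs_if)
next
  assume "\<not> p \<le> 1" "q \<le> 1" thus ?thesis by (simp add: min_def abs_if)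
next
  assume "\<not> p \<le> 1" "\<not> q \<le> 1" thus ?thesis by (simp add: min_def)
qed

lemma dct_zero:
  fixes s :: "nat \<Rightarrow> real \<Rightarrow> real" and w :: "real \<Rightarrow> real"
  assumes sm: "\<And>i. s i \<in> borel_measurable borel" and w: "integrable lborel w"
    and lim: "\<And>x. (\<lambda>i. s i x) \<longlonglongrightarrow> 0" and bnd: "\<And>i x. \<bar>s i x\<bar> \<le> w x"
  shows "(\<lambda>i. \<integral>x. s i x \<partial>lborel) \<longlonglongrightarrow> 0"
proof -
  have "(\<lambda>i. integral\<^sup>L lborel (s i)) \<longlonglongrightarrow> integral\<^sup>L lborel (\<lambda>x. 0::real)"
    using Bochner_Integration.integral_dominated_convergence[of "\<lambda>x. 0::real" lborel s w] sm w lim bnd by auto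
  thus ?thesis by simp
qed

lemma approx_open:
  assumes U: "open U" "U \<subseteq> {-R..R}" and R: "R \<ge> 0"
  shows "approx (\<lambda>x. indicator U x :: complex)"
proof -
  have Ub[measurable]: "U \<in> sets borel" using U(1) by simp
  have "emeasure lborel U \<le> emeasure lborel {-R..R}" using U(2) by (intro emeasure_mono) auto
  moreover have "emeasure lborel {-R..R} < \<infinity>" by (simp add: emeasure_lborel_Icc_eq)
  ultimately have Uf: "emeasure lborel U < \<infinity>" by (rule le_less_trans)
  have ind_int: "integrable lborel (indicator U :: real \<Rightarrow> real)"
    using Uf by (simp add: integrable_indicator_iff)
  have "R + 1 \<notin> U" using U(2) by auto
  hence ne: "-U \<noteq> {}" by auto
  have cl: "closed (-U)" using U(1) by (simp add: closed_Compl)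
  define \<phi> where "\<phi> n x = complex_of_real (min 1 (real n * infdist x (-U)))" for n :: nat and x
  have \<phi>m[measurable]: "\<phi> n \<in> borel_measurable borel" for n
  proof -
    have "continuous_on UNIV (\<lambda>x. min 1 (real n * infdist x (-U)))" by (intro continuous_intros)
    hence "continuous_on UNIV (\<phi> n)" unfolding \<phi>_def by (intro continuous_intros)
    thus ?thesis by (rule borel_measurable_continuous_onI)
  qed
  have \<phi>0: "\<phi> n x = 0" if "x \<notin> U" for n x
    using that by (simp add: \<phi>_def)
  have \<phi>b: "0 \<le> min 1 (real n * infdist x (-U))" "min 1 (real n * infdist x (-U)) \<le> 1" for n x
    by (auto simp: infdist_nonneg)
  have \<phi>_approx: "approx (\<phi> n)" for n
  proof (rule avg_approx[where L="real n" and R=R])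
    fix x y
    have "\<bar>min 1 (real n * infdist x (-U)) - min 1 (real n * infdist y (-U))\<bar> \<le> \<bar>real n * infdist x (-U) - real n * infdist y (-U)\<bar>"
      by (rule min1_lip)
    also have "\<dots> = real n * \<bar>infdist x (-U) - infdist y (-U)\<bar>" by (simp add: right_diff_distrib[symmetric] abs_mult)
    also have "\<dots> \<le> real n * \<bar>x - y\<bar>" using infdist_triangle_abs[of x "-U" y] by (intro mult_left_mono) (auto simp: dist_real_def)
    finally show "cmod (\<phi> n x - \<phi> n y) \<le> real n * \<bar>x - y\<bar>"
      unfolding \<phi>_def by (simp only: of_real_diff[symmetric] norm_of_real)
  next
    fix x show "cmod (\<phi> n x) \<le> 1" unfolding \<phi>_def using \<phi>b[of n x] by (simp only: norm_of_real)
  next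
    fix x assume "\<bar>x\<bar> > R"
    have "x \<notin> U"
    proof
      assume "x \<in> U"
      hence "-R \<le> x" "x \<le> R" using U(2) by auto
      thus False using \<open>\<bar>x\<bar> > R\<close> by arith
    qed
    thus "\<phi> n x = 0" by (rule \<phi>0)
  qed (use R in auto)
  define s where "s n x = (cmod (indicator U x - \<phi> n x))\<^sup>2" for n x
  have conv: "(\<lambda>n. \<integral>x. s n x \<partial>lborel) \<longlonglongrightarrow> 0"
  proof (rule dct_zero[OF _ ind_int])
    show "s i \<in> borel_measurable borel" for i unfolding s_def by measurable
    fix x
    show "(\<lambda>i. s i x) \<longlonglongrightarrow> 0"
    proof (cases "x \<in> U")
      case True
      have d: "infdist x (-U) > 0" using True by (intro infdist_pos_not_in_closed cl ne) auto
      obtain N :: nat where N: "real N > 1 / infdist x (-U)" using reals_Archimedean2 by blast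
      have "s n x = 0" if "n \<ge> N" for n
      proof -
        have "real n > 1 / infdist x (-U)" using N that by linarith
        hence "real n * infdist x (-U) > 1" using d by (simp add: field_simps)
        hence "min 1 (real n * infdist x (-U)) = 1" by simp
        thus ?thesis using True unfolding s_def \<phi>_def by simp
      qed
      thus ?thesis by (intro tendsto_eventually eventually_sequentiallyI) 
    next
      case False
      thus ?thesis unfolding s_def using \<phi>0[OF False] by simp
    qed
    fix i
    show "\<bar>s i x\<bar> \<le> indicator U x"
    proof (cases "x \<in> U")
      case True
      have "1 - \<phi> i x = complex_of_real (1 - min 1 (real i * infdist x (-U)))"
        unfolding \<phi>_def by simp
      hence "cmod (1 - \<phi> i x) = \<bar>1 - min 1 (real i * infdist x (-U))\<bar>"
        by (simp only: norm_of_real)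
      also have "\<dots> \<le> 1" using \<phi>b[of i x] by linarith
      finally have "(cmod (1 - \<phi> i x))\<^sup>2 \<le> 1" by (simp add: power_le_one)
      thus ?thesis using True unfolding s_def by simp
    next
      case False thus ?thesis unfolding s_def using \<phi>0[OF False] by simp
    qed
  qed
  show ?thesis
  proof (rule approx_closure)
    show "L2 (\<lambda>x. indicator U x :: complex)" unfolding L2_def
    proof
      show "(\<lambda>x. indicator U x :: complex) \<in> borel_measurable lborel" by measurable
      have "(\<lambda>x. (cmod (indicator U x :: complex))\<^sup>2) = indicator U" by (auto simp: indicator_def)
      thus "integrable lborel (\<lambda>x. (cmod (indicator U x :: complex))\<^sup>2)" using ind_int by simp
    qed
    fix \<epsilon> :: real assume eps: "\<epsilon> > 0"
    obtain no where "\<forall>n\<ge>no. norm ((\<integral>x. s n x \<partial>lborel) - 0) < \<epsilon>" using LIMSEQ_D[OF conv eps] by blast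
    then obtain n where "\<bar>(\<integral>x. s n x \<partial>lborel) - 0\<bar> < \<epsilon>" by auto
    hence "(\<integral>x. (cmod (indicator U x - \<phi> n x))\<^sup>2 \<partial>lborel) < \<epsilon>" unfolding s_def by simp
    thus "\<exists>h. approx h \<and> (\<integral>x. (cmod (indicator U x - h x))\<^sup>2 \<partial>lborel) < \<epsilon>" using \<phi>_approx by blast
  qed
qed

lemma L2_ind: assumes "A \<in> sets borel" "emeasure lborel A < \<infinity>"
  shows "L2 (\<lambda>x. indicator A x :: complex)"
  unfolding L2_def
proof
  show "(\<lambda>x. indicator A x :: complex) \<in> borel_measurable lborel" using assms(1) by measurable
  have "(\<lambda>x. (cmod (indicator A x :: complex))\<^sup>2) = indicator A" by (auto simp: indicator_def)
  moreover have "integrable lborel (indicator A :: real \<Rightarrow> real)" using assms by (simp add: integrable_indicator_iff)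
  ultimately show "integrable lborel (\<lambda>x. (cmod (indicator A x :: complex))\<^sup>2)" by simp
qed

lemma approx_bounded_set:
  assumes B: "B \<in> sets borel" "B \<subseteq> {-M..M}" and M: "M \<ge> 0"
  shows "approx (\<lambda>x. indicator B x :: complex)"
proof (rule approx_closure)
  have "emeasure lborel B \<le> emeasure lborel {-M..M}" using B by (intro emeasure_mono) auto
  moreover have "emeasure lborel {-M..M} < \<infinity>" by (simp add: emeasure_lborel_Icc_eq)
  ultimately have Bf: "emeasure lborel B < \<infinity>" by (rule le_less_trans)
  show "L2 (\<lambda>x. indicator B x :: complex)" by (rule L2_ind[OF B(1) Bf])
  fix \<epsilon> :: real assume eps: "\<epsilon> > 0"
  obtain U where U: "open U" "B \<subseteq> U" "emeasure lborel (U - B) < \<epsilon>"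
    using outer_regular_lborel[OF B(1) eps] by blast
  define U' where "U' = U \<inter> {-M-1<..<M+1}"
  have oU': "open U'" unfolding U'_def using U(1) by (intro open_Int) auto
  have BU': "B \<subseteq> U'" unfolding U'_def using U(2) B(2) by auto
  have U'b: "U' \<subseteq> {-(M+1)..M+1}" unfolding U'_def by auto
  have ap: "approx (\<lambda>x. indicator U' x :: complex)" using approx_open[OF oU' U'b] M by simp
  have m[measurable]: "U' \<in> sets borel" using oU' by simp
  have "emeasure lborel (U' - B) \<le> emeasure lborel (U - B)" unfolding U'_def
    using U(1) B(1) by (intro emeasure_mono) auto
  hence em: "emeasure lborel (U' - B) < \<epsilon>" using U(3) by simp
  hence "measure lborel (U' - B) < \<epsilon>" unfolding measure_def
    by (subst enn2real_less_iff) (auto simp: less_le_trans[OF em])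
  moreover have "(\<integral>x. (cmod (indicator B x - indicator U' x :: complex))\<^sup>2 \<partial>lborel) = measure lborel (U' - B)"
  proof -
    have "(cmod (indicator B x - indicator U' x :: complex))\<^sup>2 = indicator (U' - B) x" for x
      using BU' by (cases "x \<in> B"; cases "x \<in> U'") auto
    hence "(\<lambda>x. (cmod (indicator B x - indicator U' x :: complex))\<^sup>2) = indicator (U' - B)" by auto
    thus ?thesis by simp
  qed
  ultimately show "\<exists>h. approx h \<and> (\<integral>x. (cmod (indicator B x - h x))\<^sup>2 \<partial>lborel) < \<epsilon>"
    using ap by auto
qed

lemma approx_set:
  assumes A: "A \<in> sets borel" "emeasure lborel A < \<infinity>"
  shows "approx (\<lambda>x. indicator A x :: complex)"
proof (rule approx_closure)
  show "L2 (\<lambda>x. indicator A x :: complex)" by (rule L2_ind[OF A])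
  have Ai: "integrable lborel (indicator A :: real \<Rightarrow> real)" using A by (simp add: integrable_indicator_iff)
  define s where "s n x = (cmod (indicator A x - indicator (A \<inter> {-real n..real n}) x :: complex))\<^sup>2" for n x
  have s_eq: "s n x = indicator (A - {-real n..real n}) x" for n x unfolding s_def by (auto simp: indicator_def)
  have conv: "(\<lambda>n. \<integral>x. s n x \<partial>lborel) \<longlonglongrightarrow> 0"
  proof (rule dct_zero[OF _ Ai])
    show "s i \<in> borel_measurable borel" for i unfolding s_eq using A(1) by measurable
    fix x
    obtain N :: nat where N: "real N \<ge> \<bar>x\<bar>" using real_arch_simple by blast
    have "s n x = 0" if "n \<ge> N" for n
    proof -
      have "real N \<le> real n" using that by simp
      hence "real n \<ge> \<bar>x\<bar>" using N by linarith
      hence "x \<in> {-real n..real n}" by (auto simp: abs_le_iff)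
      thus ?thesis unfolding s_eq by simp
    qed
    thus "(\<lambda>i. s i x) \<longlonglongrightarrow> 0" by (intro tendsto_eventually eventually_sequentiallyI)
    fix i show "\<bar>s i x\<bar> \<le> indicator A x" unfolding s_eq by (auto simp: indicator_def)
  qed
  fix \<epsilon> :: real assume eps: "\<epsilon> > 0"
  obtain no where "\<forall>n\<ge>no. norm ((\<integral>x. s n x \<partial>lborel) - 0) < \<epsilon>" using LIMSEQ_D[OF conv eps] by blast
  then obtain n where "\<bar>(\<integral>x. s n x \<partial>lborel) - 0\<bar> < \<epsilon>" by auto
  hence "(\<integral>x. (cmod (indicator A x - indicator (A \<inter> {-real n..real n}) x :: complex))\<^sup>2 \<partial>lborel) < \<epsilon>"
    unfolding s_def by simp
  moreover have "approx (\<lambda>x. indicator (A \<inter> {-real n..real n}) x :: complex)"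
    using A(1) by (intro approx_bounded_set) auto
  ultimately show "\<exists>h. approx h \<and> (\<integral>x. (cmod (indicator A x - h x))\<^sup>2 \<partial>lborel) < \<epsilon>" by blast
qed
lemma all_approx: assumes f: "L2 f" shows "approx f"
proof -
  have fm[measurable]: "f \<in> borel_measurable borel" by (rule L2_meas[OF f])
  hence "f \<in> borel_measurable lborel" by simp
  then obtain F where F: "\<forall>i. simple_function lborel (F i)" "\<forall>x\<in>space lborel. (\<lambda>i. F i x) \<longlonglongrightarrow> f x"
      "\<forall>i. \<forall>x\<in>space lborel. dist (F i x) 0 \<le> 2 * dist (f x) 0"
    using borel_measurable_implies_sequence_metric[of f lborel 0] by blast
  have Flim: "(\<lambda>i. F i x) \<longlonglongrightarrow> f x" for x using F(2) by simp
  have Fb: "cmod (F i x) \<le> 2 * cmod (f x)" for i x using F(3) by simp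
  have Fm[measurable]: "F i \<in> borel_measurable borel" for i
    using borel_measurable_simple_function[OF F(1)[rule_format, of i]] by simp
  have fin: "finite (range (F i))" for i using simple_functionD(1)[OF F(1)[rule_format, of i]] by simp
  have Fs: "F i -` {y} \<in> sets borel" for i y
    using simple_functionD(2)[OF F(1)[rule_format, of i], of "{y}"] by simp
  have Fapprox: "approx (F i)" for i
  proof -
    have rep: "F i = (\<lambda>x. \<Sum>y\<in>range (F i). y * indicator (F i -` {y}) x)"
    proof
      fix x
      have "(\<Sum>y\<in>range (F i). y * indicator (F i -` {y}) x) = (\<Sum>y\<in>range (F i). if y = F i x then y else 0)"
        by (intro sum.cong) (auto simp: indicator_def)
      also have "\<dots> = F i x" using fin[of i] by simp
      finally show "F i x = (\<Sum>y\<in>range (F i). y * indicator (F i -` {y}) x)" ..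
    qed
    have "approx (\<lambda>x. y * indicator (F i -` {y}) x)" for y
    proof (cases "y = 0")
      case True thus ?thesis using approx_zero by simp
    next
      case False
      have "integrable lborel (indicator (F i -` {y}) :: real \<Rightarrow> real)"
      proof (rule Bochner_Integration.integrable_bound)
        show "integrable lborel (\<lambda>x. 4 / (cmod y)\<^sup>2 * (cmod (f x))\<^sup>2)"
          using L2_int[OF f] by (rule integrable_mult_right)
        show "(indicator (F i -` {y}) :: real \<Rightarrow> real) \<in> borel_measurable lborel" using Fs by simp
        show "AE x in lborel. norm (indicator (F i -` {y}) x :: real) \<le> norm (4 / (cmod y)\<^sup>2 * (cmod (f x))\<^sup>2)"
        proof (intro AE_I2)
          fix x
          show "norm (indicator (F i -` {y}) x :: real) \<le> norm (4 / (cmod y)\<^sup>2 * (cmod (f x))\<^sup>2)"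
          proof (cases "F i x = y")
            case True
            have "cmod y \<le> 2 * cmod (f x)" using Fb[of i x] True by simp
            hence "(cmod y)\<^sup>2 \<le> (2 * cmod (f x))\<^sup>2" by (intro power_mono) auto
            hence "(cmod y)\<^sup>2 \<le> 4 * (cmod (f x))\<^sup>2" by (simp add: power_mult_distrib)
            hence "1 \<le> 4 / (cmod y)\<^sup>2 * (cmod (f x))\<^sup>2" using False by (simp add: field_simps)
            thus ?thesis using True by simp
          next
            case False thus ?thesis by simp
          qed
        qed
      qed
      hence "emeasure lborel (F i -` {y}) < \<infinity>" by (simp add: integrable_indicator_iff)
      thus ?thesis using Fs[of i y] by (intro approx_cmult approx_set) auto
    qed
    hence "approx (\<lambda>x. \<Sum>y\<in>range (F i). y * indicator (F i -` {y}) x)"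
      using fin[of i] by (intro approx_sum) auto
    thus ?thesis using rep by simp
  qed
  define s where "s i x = (cmod (f x - F i x))\<^sup>2" for i x
  have w: "integrable lborel (\<lambda>x. 9 * (cmod (f x))\<^sup>2)" using L2_int[OF f] by (rule integrable_mult_right)
  have conv: "(\<lambda>i. \<integral>x. s i x \<partial>lborel) \<longlonglongrightarrow> 0"
  proof (rule dct_zero[OF _ w])
    show "s i \<in> borel_measurable borel" for i unfolding s_def by measurable
    fix x
    have "(\<lambda>i. f x - F i x) \<longlonglongrightarrow> f x - f x" by (intro tendsto_intros Flim)
    hence "(\<lambda>i. (cmod (f x - F i x))\<^sup>2) \<longlonglongrightarrow> (cmod (f x - f x))\<^sup>2" by (intro tendsto_power tendsto_norm)
    thus "(\<lambda>i. s i x) \<longlonglongrightarrow> 0" unfolding s_def by simp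
    fix i
    have "cmod (f x - F i x) \<le> cmod (f x) + cmod (F i x)" by (rule norm_triangle_ineq4)
    also have "\<dots> \<le> 3 * cmod (f x)" using Fb[of i x] by simp
    finally have "(cmod (f x - F i x))\<^sup>2 \<le> (3 * cmod (f x))\<^sup>2" by (intro power_mono) auto
    thus "\<bar>s i x\<bar> \<le> 9 * (cmod (f x))\<^sup>2" unfolding s_def by (simp add: power_mult_distrib)
  qed
  show ?thesis
  proof (rule approx_closure[OF f])
    fix \<epsilon> :: real assume eps: "\<epsilon> > 0"
    obtain no where "\<forall>n\<ge>no. norm ((\<integral>x. s n x \<partial>lborel) - 0) < \<epsilon>" using LIMSEQ_D[OF conv eps] by blast
    then obtain n where "\<bar>(\<integral>x. s n x \<partial>lborel) - 0\<bar> < \<epsilon>" by auto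
    hence "(\<integral>x. (cmod (f x - F n x))\<^sup>2 \<partial>lborel) < \<epsilon>" unfolding s_def by simp
    thus "\<exists>h. approx h \<and> (\<integral>x. (cmod (f x - h x))\<^sup>2 \<partial>lborel) < \<epsilon>" using Fapprox by blast
  qed
qed

lemma part1:
  assumes v: "L2 v1" "L2 v2" and f: "L2 f" and eps: "\<epsilon> > 0"
  shows "\<exists>psi\<in>dom_A v1 v2 \<alpha>. L2_norm (\<lambda>x. f x - psi x) < \<epsilon>"
proof -
  have e2: "\<epsilon>\<^sup>2 / 4 > 0" using eps by simp
  obtain g where g: "W21_Omega g" "(\<integral>x. (cmod (f x - g x))\<^sup>2 \<partial>lborel) < \<epsilon>\<^sup>2 / 4"
    using all_approx[OF f] e2 unfolding approx_def by blast
  obtain psi where psi: "psi \<in> dom_A v1 v2 \<alpha>" "(\<integral>x. (cmod (g x - psi x))\<^sup>2 \<partial>lborel) < \<epsilon>\<^sup>2 / 4"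
    using stepB[OF v g(1) e2] by blast
  have lpsi: "L2 psi" using psi(1) unfolding dom_A_def W21_Omega_def by auto
  have "(\<integral>x. (cmod (f x - psi x))\<^sup>2 \<partial>lborel) < \<epsilon>\<^sup>2"
    using dist2_tri[OF f W21_L2[OF g(1)] lpsi] g(2) psi(2) by linarith
  hence "L2_norm (\<lambda>x. f x - psi x) < sqrt (\<epsilon>\<^sup>2)" unfolding L2_norm_def by (simp only: real_sqrt_less_iff)
  hence "L2_norm (\<lambda>x. f x - psi x) < \<epsilon>" using eps by simp
  thus ?thesis using psi(1) by blast
qed

theorem lemma3p1:
  fixes v1 v2 :: "real \<Rightarrow> complex" and \<alpha> :: real
  assumes "L2 v1" and "L2 v2"
  shows "(\<forall>f. L2 f \<longrightarrow> (\<forall>\<epsilon>>0. \<exists>psi\<in>dom_A v1 v2 \<alpha>. L2_norm (\<lambda>x. f x - psi x) < \<epsilon>))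
       \<and> (\<forall>psi dpsi. psi \<in> dom_A v1 v2 \<alpha> \<longrightarrow> is_deriv_Omega psi dpsi \<longrightarrow> L2 (A_op v1 v2 psi dpsi))
       \<and> (\<forall>psi phi dpsi dphi. psi \<in> dom_A v1 v2 \<alpha> \<longrightarrow> phi \<in> dom_A v1 v2 \<alpha> \<longrightarrow>
            is_deriv_Omega psi dpsi \<longrightarrow> is_deriv_Omega phi dphi \<longrightarrow>
            ip (A_op v1 v2 psi dpsi) phi = ip psi (A_op v1 v2 phi dphi))"
  using part1[OF assms] part2[OF assms] part3[OF assms] by blast
end
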